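(* Let $\alpha>0$, let $X_1,X_2,\dots$ be independent uniform random variables on $(0,1]$ and $\mathcal{U}_m^0=(0,X_1,\dots,X_m)$. There is a random variable $\mathcal{L}_0^\alpha$ having the generalized Dickman distribution with parameter $1/\alpha$ such that, as $m\to\infty$, $\mathcal{L}_0^\alpha(\mathcal{U}_m^0)\to\mathcal{L}_0^\alpha$ almost surely and in $L^2$.
   Context: The directed linear tree on $(0,x_1,\dots,x_m)$ (with $x_0:=0$) joins each $x_i$ ($i\ge1$) to $\max\{x_j:0\le j<i,\ x_j<x_i\}$, the edge having weight $(x_i-\max\{x_j:0\le j<i,\ x_j<x_i\})^\alpha$. $\mathcal{L}_0^\alpha(\mathcal{U}_m^0)$ is the total weight of edges incident to $0$ in the directed linear tree on $\mathcal{U}_m^0$. The generalized Dickman distribution with parameter $1/\alpha$ is the distribution of a nonnegative random variable $X$ satisfying $X\stackrel{d}{=}U^\alpha(1+X)$, with $U$ uniform on $(0,1)$ independent of $X$ on the right; equivalently the law of $\sum_{k\ge1}(U_1\cdots U_k)^\alpha$ for i.i.d. uniform $U_i$ on $(0,1)$. *)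

theory Defs
  imports "HOL-Probability.Probability"
begin

text \<open>Directed linear tree on the sequence x 0, x 1, ..., x m (with x 0 = 0 in the
application): vertex i >= 1 is joined to the largest earlier value below x i.\<close>
definition dlt_parent :: "(nat \<Rightarrow> real) \<Rightarrow> nat \<Rightarrow> real" where
  "dlt_parent x i = Max {x j | j. j < i \<and> x j < x i}"

text \<open>Total weight of edges incident to the vertex x 0 in the directed linear tree
on (x 0, x 1, ..., x m); the edge from x i has weight (x i - parent)^alpha.\<close>
definition L0 :: "real \<Rightarrow> (nat \<Rightarrow> real) \<Rightarrow> nat \<Rightarrow> real" where
  "L0 \<alpha> x m = (\<Sum>i\<in>{1..m}. if dlt_parent x i = x 0
                              then (x i - dlt_parent x i) powr \<alpha> else 0)"

definition gen_dickman :: "real \<Rightarrow> real measure \<Rightarrow> bool" where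
  "gen_dickman \<theta> \<mu> \<longleftrightarrow>
     prob_space \<mu> \<and> sets \<mu> = sets borel \<and> (AE x in \<mu>. 0 \<le> x) \<and>
     \<mu> = distr (uniform_measure lborel {0<..<1} \<Otimes>\<^sub>M \<mu>) borel
            (\<lambda>(u, x). u powr (1 / \<theta>) * (1 + x))"

end

theory Submission
  imports Defs
begin

fun recs :: "real \<Rightarrow> real \<Rightarrow> (nat \<Rightarrow> real) \<Rightarrow> nat \<Rightarrow> nat \<Rightarrow> real" where
  "recs a s x n 0 = 0"
| "recs a s x n (Suc m) = (if x (Suc n) \<le> s then x (Suc n) powr a + recs a (x (Suc n)) x (Suc n) m
                           else recs a s x (Suc n) m)"

definition rterm :: "real \<Rightarrow> real \<Rightarrow> (nat \<Rightarrow> real) \<Rightarrow> nat \<Rightarrow> nat \<Rightarrow> real" where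
  "rterm a s x n i = (if x i \<le> s \<and> (\<forall>j\<in>{Suc n..<i}. x i \<le> x j) then x i powr a else 0)"

lemma recs_closed: "recs a s x n m = (\<Sum>i\<in>{Suc n..n+m}. rterm a s x n i)"
proof (induction m arbitrary: n s)
  case 0
  then show ?case by simp
next
  case (Suc m)
  have set: "{Suc n..n + Suc m} = insert (Suc n) {Suc (Suc n)..Suc n + m}" by auto
  have nin: "Suc n \<notin> {Suc (Suc n)..Suc n + m}" by auto
  have t1: "rterm a s x n (Suc n) = (if x (Suc n) \<le> s then x (Suc n) powr a else 0)"
    by (simp add: rterm_def)
  have rest: "(\<Sum>i\<in>{Suc (Suc n)..Suc n + m}. rterm a s x n i) =
     (\<Sum>i\<in>{Suc (Suc n)..Suc n + m}. rterm a (if x (Suc n) \<le> s then x (Suc n) else s) x (Suc n) i)"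
  proof (rule sum.cong[OF refl])
    fix i assume i: "i \<in> {Suc (Suc n)..Suc n + m}"
    have split: "{Suc n..<i} = insert (Suc n) {Suc (Suc n)..<i}" using i by auto
    show "rterm a s x n i = rterm a (if x (Suc n) \<le> s then x (Suc n) else s) x (Suc n) i"
      unfolding rterm_def split by auto
  qed
  show ?case
    unfolding set sum.insert[OF finite_atLeastAtMost nin] t1 rest Suc.IH[symmetric]
    by simp
qed

lemma rterm_nonneg: "0 \<le> rterm a s x n i"
  by (simp add: rterm_def)

lemma recs_nonneg: "0 \<le> recs a s x n m"
  unfolding recs_closed by (intro sum_nonneg rterm_nonneg)

lemma recs_mono_m: "m \<le> m' \<Longrightarrow> recs a s x n m \<le> recs a s x n m'"
  unfolding recs_closed by (intro sum_mono2) (auto simp: rterm_nonneg)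

lemma recs_mono_s: "s \<le> s' \<Longrightarrow> recs a s x n m \<le> recs a s' x n m"
  unfolding recs_closed by (intro sum_mono) (auto simp: rterm_def)

lemma recs_bound:
  assumes "a > 0" "\<And>i. 0 \<le> x i \<and> x i \<le> 1"
  shows "recs a s x n m \<le> m"
proof -
  have "recs a s x n m \<le> (\<Sum>i\<in>{Suc n..n+m}. 1)"
    unfolding recs_closed
    by (intro sum_mono) (use assms in \<open>auto simp: rterm_def intro!: powr_le1\<close>)
  then show ?thesis by simp
qed

lemma recs_local:
  "(\<And>i. i \<in> {Suc n..n+m} \<Longrightarrow> x i = y i) \<Longrightarrow> recs a s x n m = recs a s y n m"
proof (induction m arbitrary: n s)
  case 0 then show ?case by simp
next
  case (Suc m)
  have e: "x (Suc n) = y (Suc n)" using Suc.prems by auto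
  have "recs a t x (Suc n) m = recs a t y (Suc n) m" for t
    by (rule Suc.IH) (use Suc.prems in auto)
  then show ?case by (simp add: e)
qed

lemma recs_measurable:
  assumes "S \<in> borel_measurable N"
    and "\<And>i. i \<in> {Suc n..n+m} \<Longrightarrow> (\<lambda>\<omega>. Z \<omega> i) \<in> borel_measurable N"
  shows "(\<lambda>\<omega>. recs a (S \<omega>) (Z \<omega>) n m) \<in> borel_measurable N"
  using assms
proof (induction m arbitrary: n S)
  case 0 then show ?case by simp
next
  case (Suc m)
  have Z1: "(\<lambda>\<omega>. Z \<omega> (Suc n)) \<in> borel_measurable N" using Suc.prems by auto
  have IH1: "(\<lambda>\<omega>. recs a (Z \<omega> (Suc n)) (Z \<omega>) (Suc n) m) \<in> borel_measurable N"
    by (rule Suc.IH[OF Z1]) (use Suc.prems in auto)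
  have IH2: "(\<lambda>\<omega>. recs a (S \<omega>) (Z \<omega>) (Suc n) m) \<in> borel_measurable N"
    by (rule Suc.IH[OF Suc.prems(1)]) (use Suc.prems in auto)
  show ?case using Z1 IH1 IH2 Suc.prems(1) by simp
qed

lemma dlt_parent_zero_iff:
  assumes x0: "x 0 = 0" and pos: "\<And>j. j \<in> {1..<i} \<Longrightarrow> 0 < x j" and xi: "0 < x i"
  shows "dlt_parent x i = x 0 \<longleftrightarrow> (\<forall>j\<in>{Suc 0..<i}. x i \<le> x j)"
proof -
  let ?S = "{x j |j. j < i \<and> x j < x i}"
  have fin: "finite ?S"
  proof -
    have "?S \<subseteq> x ` {..<i}" by auto
    then show ?thesis by (rule finite_subset) auto
  qed
  have i0: "i > 0" if "\<exists>j\<in>{Suc 0..<i}. x j < x i" using that by auto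
  show ?thesis
  proof
    assume h: "dlt_parent x i = x 0"
    show "\<forall>j\<in>{Suc 0..<i}. x i \<le> x j"
    proof (rule ccontr)
      assume "\<not> (\<forall>j\<in>{Suc 0..<i}. x i \<le> x j)"
      then obtain j where j: "j \<in> {Suc 0..<i}" "x j < x i" by force
      then have "x j \<in> ?S" by auto
      then have "x j \<le> Max ?S" using fin by (rule Max_ge[rotated])
      moreover have "0 < x j" using pos j by auto
      ultimately show False using h x0 unfolding dlt_parent_def by simp
    qed
  next
    assume h: "\<forall>j\<in>{Suc 0..<i}. x i \<le> x j"
    have "i > 0"
    proof (rule ccontr)
      assume "\<not> i > 0" then have "i = 0" by simp
      then show False using xi x0 by simp
    qed
    have "?S = {0}"
    proof
      show "?S \<subseteq> {0}"
      proof
        fix y assume "y \<in> ?S"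
        then obtain j where "y = x j" "j < i" "x j < x i" by auto
        then show "y \<in> {0}" using h x0 by (cases j) force+
      qed
      show "{0} \<subseteq> ?S" using \<open>i > 0\<close> x0 xi by force
    qed
    then show "dlt_parent x i = x 0" unfolding dlt_parent_def using x0 by simp
  qed
qed

lemma L0_eq_recs:
  assumes x0: "x 0 = 0" and pos: "\<And>j. j \<ge> 1 \<Longrightarrow> 0 < x j \<and> x j \<le> 1"
  shows "L0 a x m = recs a 1 x 0 m"
  unfolding L0_def recs_closed
proof (rule sum.cong)
  show "{1..m} = {Suc 0..0 + m}" by simp
next
  fix i assume i: "i \<in> {Suc 0..0 + m}"
  have xi: "0 < x i" "x i \<le> 1" using pos i by auto
  have iff: "dlt_parent x i = x 0 \<longleftrightarrow> (\<forall>j\<in>{Suc 0..<i}. x i \<le> x j)"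
    by (rule dlt_parent_zero_iff[where x=x and i=i, OF x0]) (use pos xi in auto)
  show "(if dlt_parent x i = x 0 then (x i - dlt_parent x i) powr a else 0) = rterm a 1 x 0 i"
    unfolding rterm_def using iff xi x0 by auto
qed

lemma dlt_parent_measurable:
  assumes Z: "\<And>j. (\<lambda>\<omega>. Z \<omega> j) \<in> borel_measurable N"
  shows "(\<lambda>\<omega>. dlt_parent (Z \<omega>) i) \<in> borel_measurable N"
proof -
  have eq: "dlt_parent (Z \<omega>) i = (\<Sum>S\<in>Pow {..<i}. if {j. j < i \<and> Z \<omega> j < Z \<omega> i} = S
               then Max ((\<lambda>j. Z \<omega> j) ` S) else 0)" for \<omega>
  proof -
    have "(\<Sum>S\<in>Pow {..<i}. if {j. j < i \<and> Z \<omega> j < Z \<omega> i} = S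
               then Max ((\<lambda>j. Z \<omega> j) ` S) else 0)
        = (if {j. j < i \<and> Z \<omega> j < Z \<omega> i} \<in> Pow {..<i} then
             Max ((\<lambda>j. Z \<omega> j) ` {j. j < i \<and> Z \<omega> j < Z \<omega> i}) else 0)"
      by (rule sum.delta') simp
    also have "\<dots> = Max ((\<lambda>j. Z \<omega> j) ` {j. j < i \<and> Z \<omega> j < Z \<omega> i})" by auto
    also have "\<dots> = dlt_parent (Z \<omega>) i" unfolding dlt_parent_def
      by (rule arg_cong[where f=Max]) auto
    finally show ?thesis by simp
  qed
  have pred: "{\<omega> \<in> space N. {j. j < i \<and> Z \<omega> j < Z \<omega> i} = S} \<in> sets N" for S
  proof -
    have "{\<omega> \<in> space N. {j. j < i \<and> Z \<omega> j < Z \<omega> i} = S}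
        = {\<omega> \<in> space N. \<forall>j\<in>{..<i}. (Z \<omega> j < Z \<omega> i) = (j \<in> S)} \<inter>
          {\<omega> \<in> space N. S \<subseteq> {..<i}}"
      by auto
    also have "\<dots> \<in> sets N"
      using Z by measurable
    finally show ?thesis .
  qed
  have Mx: "(\<lambda>\<omega>. Max ((\<lambda>j. Z \<omega> j) ` S)) \<in> borel_measurable N" if "S \<in> Pow {..<i}" for S
  proof -
    from that have "finite S" by (auto intro: finite_subset)
    then show ?thesis
      using Z by (intro borel_measurable_Max[where f="\<lambda>j \<omega>. Z \<omega> j"]) auto
  qed
  have "(\<lambda>\<omega>. \<Sum>S\<in>Pow {..<i}. if {j. j < i \<and> Z \<omega> j < Z \<omega> i} = S
               then Max ((\<lambda>j. Z \<omega> j) ` S) else 0) \<in> borel_measurable N"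
    by (rule borel_measurable_sum, rule measurable_If[OF Mx _ pred]) auto
  then show ?thesis unfolding eq[symmetric] .
qed

lemma L0_measurable:
  assumes Z: "\<And>j. (\<lambda>\<omega>. Z \<omega> j) \<in> borel_measurable N"
  shows "(\<lambda>\<omega>. L0 a (Z \<omega>) m) \<in> borel_measurable N"
  unfolding L0_def
proof (rule borel_measurable_sum)
  fix i
  have d: "(\<lambda>\<omega>. dlt_parent (Z \<omega>) i) \<in> borel_measurable N"
    by (rule dlt_parent_measurable[OF Z])
  have Zi: "(\<lambda>\<omega>. Z \<omega> i) \<in> borel_measurable N" "(\<lambda>\<omega>. Z \<omega> 0) \<in> borel_measurable N" using Z by auto
  have f: "(\<lambda>\<omega>. (Z \<omega> i - dlt_parent (Z \<omega>) i) powr a) \<in> borel_measurable N"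
    using d Zi by measurable
  have p: "{\<omega> \<in> space N. dlt_parent (Z \<omega>) i = Z \<omega> 0} \<in> sets N"
    using d Zi by measurable
  show "(\<lambda>\<omega>. if dlt_parent (Z \<omega>) i = Z \<omega> 0 then (Z \<omega> i - dlt_parent (Z \<omega>) i) powr a else 0) \<in> borel_measurable N"
    by (rule measurable_If[OF f _ p]) simp
qed

definition Uc :: "real measure" where
  "Uc = density lborel (\<lambda>x. ennreal (indicator {0<..1} x))"

lemma sets_Uc[simp, measurable_cong]: "sets Uc = sets borel"
  by (simp add: Uc_def)

lemma space_Uc[simp]: "space Uc = UNIV"
  by (simp add: Uc_def)

lemma prob_space_Uc: "prob_space Uc"
proof
  have "emeasure Uc (space Uc) = (\<integral>\<^sup>+ x. indicator {0<..1::real} x \<partial>lborel)"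
    unfolding Uc_def by (subst emeasure_density) (auto simp: ennreal_indicator intro!: nn_integral_cong)
  also have "\<dots> = 1" by simp
  finally show "emeasure Uc (space Uc) = 1" .
qed

lemma AE_Uc: "AE x in Uc. 0 < x \<and> x \<le> 1"
  unfolding Uc_def by (subst AE_density) (auto simp: indicator_def)

lemma integral_Uc:
  fixes f :: "real \<Rightarrow> 'b::{banach, second_countable_topology}"
  assumes "f \<in> borel_measurable borel"
  shows "integral\<^sup>L Uc f = integral\<^sup>L lborel (\<lambda>x. indicator {0<..1} x *\<^sub>R f x)"
  unfolding Uc_def using assms by (subst integral_density) auto

lemma integrable_Uc_bounded:
  fixes f :: "real \<Rightarrow> 'b::{banach, second_countable_topology}"
  assumes "f \<in> borel_measurable borel" "\<And>x. 0 < x \<Longrightarrow> x \<le> 1 \<Longrightarrow> norm (f x) \<le> B"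
  shows "integrable Uc f"
proof -
  interpret prob_space Uc by (rule prob_space_Uc)
  show ?thesis
    proof (rule integrable_const_bound[where B=B])
      show "AE x in Uc. norm (f x) \<le> B" using AE_Uc by eventually_elim (use assms in auto)
    qed (use assms in simp)
qed

lemma Uc_pow:
  assumes s: "0 \<le> s" "s \<le> 1" and p: "p > 0"
  shows "integral\<^sup>L Uc (\<lambda>x. if x \<le> s then x powr p else 0) = s powr (p+1) / (p+1)"
proof -
  have "integral\<^sup>L Uc (\<lambda>x. if x \<le> s then x powr p else 0)
      = integral\<^sup>L lborel (\<lambda>x. indicator {0<..1} x *\<^sub>R (if x \<le> s then x powr p else 0))"
    by (rule integral_Uc) simp
  also have "\<dots> = integral\<^sup>L lborel (\<lambda>x. indicator {0..s} x *\<^sub>R x powr p)"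
    by (rule Bochner_Integration.integral_cong) (use s in \<open>auto simp: indicator_def\<close>)
  also have "\<dots> = (LINT x:{0..s}|lborel. x powr p)"
    by (simp add: set_lebesgue_integral_def)
  also have "\<dots> = integral {0..s} (\<lambda>x. x powr p)"
  proof (rule set_borel_integral_eq_integral(2))
    show "set_integrable lborel {0..s} (\<lambda>x. x powr p)"
      apply (rule borel_integrable_atLeastAtMost')
      apply (rule continuous_on_powr')
      using p by (auto intro!: continuous_intros)
  qed
  also have "\<dots> = s powr (p+1) / (p+1)"
    by (rule integral_unique, rule has_integral_powr_from_0) (use p s in auto)
  finally show ?thesis .
qed

lemma Uc_tail:
  assumes s: "0 \<le> s" "s \<le> 1"
  shows "integral\<^sup>L Uc (\<lambda>x. if x \<le> s then 0 else 1::real) = 1 - s"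
proof -
  have "integral\<^sup>L Uc (\<lambda>x. if x \<le> s then 0 else 1::real)
      = integral\<^sup>L lborel (\<lambda>x. indicator {0<..1} x *\<^sub>R (if x \<le> s then 0 else 1::real))"
    by (rule integral_Uc) simp
  also have "\<dots> = integral\<^sup>L lborel (indicator {s<..1})"
    by (rule Bochner_Integration.integral_cong) (use s in \<open>auto simp: indicator_def\<close>)
  also have "\<dots> = measure lborel {s<..1}" by simp
  also have "\<dots> = 1 - s" using s by (simp add: measure_def)
  finally show ?thesis .
qed

locale recsetup = prob_space M for M :: "'a measure" +
  fixes X :: "nat \<Rightarrow> 'a \<Rightarrow> real" and \<alpha> :: real
  assumes apos: "\<alpha> > 0"
    and indep: "indep_vars (\<lambda>_. borel) X {1..}"
    and distX: "\<And>i. i \<ge> 1 \<Longrightarrow> distributed M lborel (X i) (\<lambda>x. ennreal (indicator {0<..1} x))"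
begin

definition Xc :: "nat \<Rightarrow> 'a \<Rightarrow> real" where
  "Xc i \<omega> = (if 1 \<le> i \<and> 0 < X i \<omega> \<and> X i \<omega> \<le> 1 then X i \<omega> else 1)"

lemma X_meas: "i \<ge> 1 \<Longrightarrow> X i \<in> borel_measurable M"
  using distributed_measurable[OF distX] by (simp add: measurable_def)

lemma distr_X: "i \<ge> 1 \<Longrightarrow> distr M borel (X i) = Uc"
proof -
  assume i: "i \<ge> 1"
  have "distr M borel (X i) = distr M lborel (X i)"
    by (rule distr_cong_AE) (use X_meas[OF i] in auto)
  also have "\<dots> = Uc" unfolding Uc_def by (rule distributed_distr_eq_density[OF distX[OF i]])
  finally show ?thesis .
qed

lemma AE_X: "i \<ge> 1 \<Longrightarrow> AE \<omega> in M. 0 < X i \<omega> \<and> X i \<omega> \<le> 1"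
proof -
  assume i: "i \<ge> 1"
  have "AE x in distr M borel (X i). 0 < x \<and> x \<le> 1"
    unfolding distr_X[OF i] by (rule AE_Uc)
  then show ?thesis
    by (subst (asm) AE_distr_iff) (use X_meas[OF i] in auto)
qed

lemma AE_Xall: "AE \<omega> in M. \<forall>i\<ge>1. 0 < X i \<omega> \<and> X i \<omega> \<le> 1"
proof -
  have "\<forall>i::nat. AE \<omega> in M. i \<ge> 1 \<longrightarrow> 0 < X i \<omega> \<and> X i \<omega> \<le> 1"
  proof
    fix i :: nat show "AE \<omega> in M. i \<ge> 1 \<longrightarrow> 0 < X i \<omega> \<and> X i \<omega> \<le> 1"
      by (cases "i \<ge> 1") (use AE_X in auto)
  qed
  then show ?thesis by (subst AE_all_countable) auto
qed

lemma Xc_meas[measurable]: "Xc i \<in> borel_measurable M"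
proof (cases "i \<ge> 1")
  case True
  have [measurable]: "X i \<in> borel_measurable M" by (rule X_meas[OF True])
  show ?thesis unfolding Xc_def[abs_def] by measurable
next
  case False then show ?thesis by (simp add: Xc_def[abs_def])
qed

lemma Xc_range: "0 < Xc i \<omega>" "Xc i \<omega> \<le> 1"
  by (auto simp: Xc_def)

lemma AE_Xc_eq: "AE \<omega> in M. \<forall>i\<ge>1. Xc i \<omega> = X i \<omega>"
  using AE_Xall by eventually_elim (auto simp: Xc_def)

lemma distr_Xc: "i \<ge> 1 \<Longrightarrow> distr M borel (Xc i) = Uc"
proof -
  assume i: "i \<ge> 1"
  have "distr M borel (Xc i) = distr M borel (X i)"
  proof (rule distr_cong_AE)
    show "AE \<omega> in M. Xc i \<omega> = X i \<omega>"
      using AE_X[OF i] by eventually_elim (use i in \<open>auto simp: Xc_def\<close>)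
  qed (use X_meas[OF i] in auto)
  then show ?thesis using distr_X[OF i] by simp
qed

lemma indep_Xc: "indep_vars (\<lambda>_. borel) Xc {1..}"
proof -
  have "indep_vars (\<lambda>_. borel) (\<lambda>i x. (\<lambda>y. if 0 < y \<and> y \<le> 1 then y else 1) (X i x)) {1..}"
    by (rule indep_vars_compose2[OF indep]) measurable
  then show ?thesis
    by (rule indep_vars_cong[THEN iffD1, rotated -1]) (auto simp: Xc_def fun_eq_iff)
qed

lemma indep_Xc_split:
  assumes k: "k \<ge> 1" and J: "J \<subseteq> {1..}" "k \<notin> J"
  shows "indep_var (PiM {k} (\<lambda>_. borel)) (\<lambda>\<omega>. restrict (\<lambda>i. Xc i \<omega>) {k})
                  (PiM J (\<lambda>_. borel)) (\<lambda>\<omega>. restrict (\<lambda>i. Xc i \<omega>) J)"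
  by (rule indep_var_restrict[OF indep_Xc]) (use k J in auto)

lemma one_step:
  fixes g :: "real \<times> (nat \<Rightarrow> real) \<Rightarrow> 'b::{banach, second_countable_topology}"
  assumes k: "k \<ge> 1" and J: "J \<subseteq> {1..}" "k \<notin> J"
    and g[measurable]: "g \<in> borel_measurable (borel \<Otimes>\<^sub>M PiM J (\<lambda>_. borel))"
    and int: "integrable M (\<lambda>\<omega>. g (Xc k \<omega>, restrict (\<lambda>i. Xc i \<omega>) J))"
  shows "(\<integral>\<omega>. g (Xc k \<omega>, restrict (\<lambda>i. Xc i \<omega>) J) \<partial>M)
           = (\<integral>x. (\<integral>\<omega>. g (x, restrict (\<lambda>i. Xc i \<omega>) J) \<partial>M) \<partial>Uc)"
    and "integrable Uc (\<lambda>x. (\<integral>\<omega>. g (x, restrict (\<lambda>i. Xc i \<omega>) J) \<partial>M))"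
proof -
  define R where "R = (\<lambda>\<omega>. restrict (\<lambda>i. Xc i \<omega>) {k})"
  define Y where "Y = (\<lambda>\<omega>. restrict (\<lambda>i. Xc i \<omega>) J)"
  define G where "G = (\<lambda>(f::nat \<Rightarrow> real, y::nat \<Rightarrow> real). g (f k, y))"
  define PR where "PR = distr M (PiM {k} (\<lambda>_. borel)) R"
  define PY where "PY = distr M (PiM J (\<lambda>_. borel)) Y"
  have R[measurable]: "R \<in> measurable M (PiM {k} (\<lambda>_. borel))"
    unfolding R_def by measurable
  have Y[measurable]: "Y \<in> measurable M (PiM J (\<lambda>_. borel))"
    unfolding Y_def by measurable
  have G[measurable]: "G \<in> borel_measurable (PiM {k} (\<lambda>_. borel) \<Otimes>\<^sub>M PiM J (\<lambda>_. borel))"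
    unfolding G_def by measurable
  interpret PR: prob_space PR unfolding PR_def by (rule prob_space_distr) simp
  interpret PY: prob_space PY unfolding PY_def by (rule prob_space_distr) simp
  interpret P: pair_prob_space PR PY ..
  have ind: "indep_var (PiM {k} (\<lambda>_. borel)) R (PiM J (\<lambda>_. borel)) Y"
    unfolding R_def Y_def by (rule indep_Xc_split[OF k J])
  have joint: "PR \<Otimes>\<^sub>M PY = distr M (PiM {k} (\<lambda>_. borel) \<Otimes>\<^sub>M PiM J (\<lambda>_. borel)) (\<lambda>\<omega>. (R \<omega>, Y \<omega>))"
    using ind unfolding indep_var_distribution_eq PR_def PY_def by simp
  have GRY: "G (R \<omega>, Y \<omega>) = g (Xc k \<omega>, restrict (\<lambda>i. Xc i \<omega>) J)" for \<omega>
    by (simp add: G_def R_def Y_def)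
  have intG: "integrable (PR \<Otimes>\<^sub>M PY) G"
    unfolding joint by (subst integrable_distr_eq) (use int in \<open>auto simp: GRY\<close>)
  have "(\<integral>\<omega>. g (Xc k \<omega>, restrict (\<lambda>i. Xc i \<omega>) J) \<partial>M) = integral\<^sup>L (PR \<Otimes>\<^sub>M PY) G"
    unfolding joint by (subst integral_distr) (auto simp: GRY)
  also have "\<dots> = (\<integral>f. (\<integral>y. G (f, y) \<partial>PY) \<partial>PR)"
    by (rule P.integral_fst'[OF intG, symmetric])
  finally have eq1: "(\<integral>\<omega>. g (Xc k \<omega>, restrict (\<lambda>i. Xc i \<omega>) J) \<partial>M) = (\<integral>f. (\<integral>y. G (f, y) \<partial>PY) \<partial>PR)" .
  have int1: "integrable PR (\<lambda>f. \<integral>y. G (f, y) \<partial>PY)"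
    by (rule P.integrable_fst'[OF intG])
  define \<phi> where "\<phi> = (\<lambda>x. (\<integral>\<omega>. g (x, restrict (\<lambda>i. Xc i \<omega>) J) \<partial>M))"
  have inner: "(\<integral>y. G (f, y) \<partial>PY) = \<phi> (f k)" for f
    unfolding PY_def \<phi>_def G_def by (subst integral_distr) (auto simp: Y_def)
  have mphi: "\<phi> \<in> borel_measurable borel"
  proof -
    have "(\<lambda>f. \<integral>y. G (f, y) \<partial>PY) \<in> borel_measurable PR"
      using int1 by (rule borel_measurable_integrable)
    then have "(\<lambda>f. \<phi> (f k)) \<in> borel_measurable (PiM {k} (\<lambda>_. borel))"
      unfolding inner by (simp add: PR_def)
    then have "(\<lambda>x. \<phi> ((\<lambda>x. \<lambda>i\<in>{k}. x) x k)) \<in> borel_measurable borel"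
      by (rule measurable_compose[rotated]) measurable
    then show ?thesis by simp
  qed
  have RXc: "R \<omega> k = Xc k \<omega>" for \<omega> by (simp add: R_def)
  have "(\<integral>f. (\<integral>y. G (f, y) \<partial>PY) \<partial>PR) = (\<integral>\<omega>. \<phi> (Xc k \<omega>) \<partial>M)"
    unfolding inner PR_def using mphi by (subst integral_distr) (auto simp: RXc)
  also have "\<dots> = integral\<^sup>L (distr M borel (Xc k)) \<phi>"
    using mphi by (subst integral_distr) auto
  also have "\<dots> = integral\<^sup>L Uc \<phi>" using distr_Xc[OF k] by simp
  finally show "(\<integral>\<omega>. g (Xc k \<omega>, restrict (\<lambda>i. Xc i \<omega>) J) \<partial>M)
           = (\<integral>x. (\<integral>\<omega>. g (x, restrict (\<lambda>i. Xc i \<omega>) J) \<partial>M) \<partial>Uc)"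
    using eq1 unfolding \<phi>_def by simp
  have "integrable M (\<lambda>\<omega>. \<phi> (Xc k \<omega>))"
    using int1 unfolding inner PR_def using mphi by (subst (asm) integrable_distr_eq) (auto simp: RXc)
  then have "integrable (distr M borel (Xc k)) \<phi>"
    using mphi by (subst integrable_distr_eq) auto
  then show "integrable Uc (\<lambda>x. (\<integral>\<omega>. g (x, restrict (\<lambda>i. Xc i \<omega>) J) \<partial>M))"
    using distr_Xc[OF k] unfolding \<phi>_def by simp
qed

end

context recsetup begin

lemma recs_Xc_bound: "recs \<alpha> s (\<lambda>i. Xc i \<omega>) n m \<le> m"
  by (rule recs_bound) (use apos Xc_range in \<open>auto intro: less_imp_le\<close>)

lemma recs_Xc_meas[measurable]: "(\<lambda>\<omega>. recs \<alpha> s (\<lambda>i. Xc i \<omega>) n m) \<in> borel_measurable M"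
  by (rule recs_measurable) auto

lemma recs_step:
  fixes F :: "real \<Rightarrow> 'b::{banach, second_countable_topology}"
  assumes F[measurable]: "F \<in> borel_measurable borel"
    and Fb: "\<And>r. 0 \<le> r \<Longrightarrow> r \<le> real (Suc m) \<Longrightarrow> norm (F r) \<le> B"
  shows "(\<integral>\<omega>. F (recs \<alpha> s (\<lambda>i. Xc i \<omega>) n (Suc m)) \<partial>M)
       = (\<integral>x. (if x \<le> s then (\<integral>\<omega>. F (x powr \<alpha> + recs \<alpha> x (\<lambda>i. Xc i \<omega>) (Suc n) m) \<partial>M)
                         else (\<integral>\<omega>. F (recs \<alpha> s (\<lambda>i. Xc i \<omega>) (Suc n) m) \<partial>M)) \<partial>Uc)"
    and "integrable Uc (\<lambda>x. (if x \<le> s then (\<integral>\<omega>. F (x powr \<alpha> + recs \<alpha> x (\<lambda>i. Xc i \<omega>) (Suc n) m) \<partial>M)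
                         else (\<integral>\<omega>. F (recs \<alpha> s (\<lambda>i. Xc i \<omega>) (Suc n) m) \<partial>M)))"
proof -
  define J where "J = {Suc (Suc n)..Suc n + m}"
  define g where "g = (\<lambda>(x::real, y::nat \<Rightarrow> real). F (if x \<le> s then x powr \<alpha> + recs \<alpha> x y (Suc n) m
                                                else recs \<alpha> s y (Suc n) m))"
  have J: "J \<subseteq> {1..}" "Suc n \<notin> J" "Suc n \<ge> 1" by (auto simp: J_def)
  let ?N = "borel \<Otimes>\<^sub>M PiM J (\<lambda>_. borel)"
  have comp: "(\<lambda>p. snd p i) \<in> borel_measurable ?N" if "i \<in> J" for i
    using that by measurable
  have r1: "(\<lambda>p. recs \<alpha> (fst p) (snd p) (Suc n) m) \<in> borel_measurable ?N"
    by (rule recs_measurable) (use comp in \<open>auto simp: J_def\<close>)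
  have r2: "(\<lambda>p. recs \<alpha> s (snd p) (Suc n) m) \<in> borel_measurable ?N"
    by (rule recs_measurable) (use comp in \<open>auto simp: J_def\<close>)
  have gm: "g \<in> borel_measurable ?N"
  proof -
    have "(\<lambda>p. F (if fst p \<le> s then fst p powr \<alpha> + recs \<alpha> (fst p) (snd p) (Suc n) m
                    else recs \<alpha> s (snd p) (Suc n) m)) \<in> borel_measurable ?N"
      using r1 r2 by measurable
    then show ?thesis unfolding g_def by (simp add: case_prod_beta')
  qed
  have loc: "recs \<alpha> t (restrict (\<lambda>i. Xc i \<omega>) J) (Suc n) m = recs \<alpha> t (\<lambda>i. Xc i \<omega>) (Suc n) m" for t \<omega>
    by (rule recs_local) (auto simp: J_def)
  have eqg: "F (recs \<alpha> s (\<lambda>i. Xc i \<omega>) n (Suc m)) = g (Xc (Suc n) \<omega>, restrict (\<lambda>i. Xc i \<omega>) J)" for \<omega>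
    by (simp add: g_def loc)
  have int: "integrable M (\<lambda>\<omega>. g (Xc (Suc n) \<omega>, restrict (\<lambda>i. Xc i \<omega>) J))"
  proof (rule integrable_const_bound[where B=B])
    show "AE \<omega> in M. norm (g (Xc (Suc n) \<omega>, restrict (\<lambda>i. Xc i \<omega>) J)) \<le> B"
      unfolding eqg[symmetric]
      by (intro AE_I2 Fb recs_nonneg recs_Xc_bound)
    show "(\<lambda>\<omega>. g (Xc (Suc n) \<omega>, restrict (\<lambda>i. Xc i \<omega>) J)) \<in> borel_measurable M"
      unfolding eqg[symmetric] by measurable
  qed
  have inner: "(\<integral>\<omega>. g (x, restrict (\<lambda>i. Xc i \<omega>) J) \<partial>M) =
      (if x \<le> s then (\<integral>\<omega>. F (x powr \<alpha> + recs \<alpha> x (\<lambda>i. Xc i \<omega>) (Suc n) m) \<partial>M)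
                         else (\<integral>\<omega>. F (recs \<alpha> s (\<lambda>i. Xc i \<omega>) (Suc n) m) \<partial>M))" for x
    by (cases "x \<le> s") (simp_all add: g_def loc)
  note os = one_step[OF J(3) J(1) J(2) gm int]
  show "(\<integral>\<omega>. F (recs \<alpha> s (\<lambda>i. Xc i \<omega>) n (Suc m)) \<partial>M)
       = (\<integral>x. (if x \<le> s then (\<integral>\<omega>. F (x powr \<alpha> + recs \<alpha> x (\<lambda>i. Xc i \<omega>) (Suc n) m) \<partial>M)
                         else (\<integral>\<omega>. F (recs \<alpha> s (\<lambda>i. Xc i \<omega>) (Suc n) m) \<partial>M)) \<partial>Uc)"
    using os(1) unfolding eqg inner .
  show "integrable Uc (\<lambda>x. (if x \<le> s then (\<integral>\<omega>. F (x powr \<alpha> + recs \<alpha> x (\<lambda>i. Xc i \<omega>) (Suc n) m) \<partial>M)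
                         else (\<integral>\<omega>. F (recs \<alpha> s (\<lambda>i. Xc i \<omega>) (Suc n) m) \<partial>M)))"
    using os(2) unfolding inner .
qed

end

lemma Uc_if_integral:
  assumes s: "0 \<le> s" "s \<le> 1" and p: "p > 0"
  shows "(\<integral>x. (if x \<le> s then c * x powr p else d) \<partial>Uc) = c * (s powr (p+1) / (p+1)) + d * (1 - s)"
proof -
  have i1: "integrable Uc (\<lambda>x. if x \<le> s then x powr p else 0)"
    by (rule integrable_Uc_bounded[where B=1]) (use p in \<open>auto intro: powr_le1\<close>)
  have i2: "integrable Uc (\<lambda>x. if x \<le> s then 0 else 1::real)"
    by (rule integrable_Uc_bounded[where B=1]) auto
  have "(\<integral>x. (if x \<le> s then c * x powr p else d) \<partial>Uc)
      = (\<integral>x. c * (if x \<le> s then x powr p else 0) + d * (if x \<le> s then 0 else 1) \<partial>Uc)"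
    by (rule Bochner_Integration.integral_cong) auto
  also have "\<dots> = c * (\<integral>x. (if x \<le> s then x powr p else 0) \<partial>Uc) + d * (\<integral>x. (if x \<le> s then 0 else 1) \<partial>Uc)"
    using i1 i2 by simp
  also have "\<dots> = c * (s powr (p+1) / (p+1)) + d * (1 - s)"
    using Uc_pow[OF s p] Uc_tail[OF s] by simp
  finally show ?thesis .
qed

primrec hfun :: "real \<Rightarrow> real \<Rightarrow> nat \<Rightarrow> real \<Rightarrow> complex" where
  "hfun a t 0 s = 1"
| "hfun a t (Suc m) s = (\<integral>x. (if x \<le> s then iexp (t * x powr a) * hfun a t m x else hfun a t m s) \<partial>Uc)"

context recsetup begin

lemma sq_ineq:
  fixes a b :: real
  shows "(a + b)\<^sup>2 \<le> (1 + 1/\<alpha>) * a\<^sup>2 + (1 + \<alpha>) * b\<^sup>2"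
proof -
  have "0 \<le> (a / sqrt \<alpha> - sqrt \<alpha> * b)\<^sup>2" by simp
  also have "\<dots> = a\<^sup>2 / \<alpha> - 2 * a * b + \<alpha> * b\<^sup>2"
    using apos by (simp add: power2_eq_square field_simps)
  finally have "2 * a * b \<le> a\<^sup>2 / \<alpha> + \<alpha> * b\<^sup>2" by simp
  then show ?thesis by (simp add: power2_eq_square field_simps)
qed

lemma mom2:
  assumes "0 \<le> s" "s \<le> 1"
  shows "(\<integral>\<omega>. (recs \<alpha> s (\<lambda>i. Xc i \<omega>) n m)\<^sup>2 \<partial>M) \<le> ((1 + 1/\<alpha>)/\<alpha>) * s powr (2*\<alpha>)"
  using assms
proof (induction m arbitrary: n s)
  case 0
  then show ?case using apos by simp
next
  case (Suc m)
  define C where "C = (1 + 1/\<alpha>)/\<alpha>"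
  define D where "D = (1 + 1/\<alpha>) + (1 + \<alpha>) * C"
  have C0: "C \<ge> 0" using apos by (simp add: C_def)
  have DC: "D = C * (2*\<alpha> + 1)" using apos by (simp add: C_def D_def field_simps)
  note st = recs_step[where F="\<lambda>r. r\<^sup>2" and B="(real (Suc m))\<^sup>2" and s=s and n=n and m=m]
  have Fb: "norm (r\<^sup>2) \<le> (real (Suc m))\<^sup>2" if "0 \<le> r" "r \<le> real (Suc m)" for r :: real
    using that by (simp add: power_mono)
  let ?\<phi> = "\<lambda>x. (if x \<le> s then (\<integral>\<omega>. (x powr \<alpha> + recs \<alpha> x (\<lambda>i. Xc i \<omega>) (Suc n) m)\<^sup>2 \<partial>M)
                         else (\<integral>\<omega>. (recs \<alpha> s (\<lambda>i. Xc i \<omega>) (Suc n) m)\<^sup>2 \<partial>M))"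
  have eq: "(\<integral>\<omega>. (recs \<alpha> s (\<lambda>i. Xc i \<omega>) n (Suc m))\<^sup>2 \<partial>M) = (\<integral>x. ?\<phi> x \<partial>Uc)"
    by (rule st(1)) (use Fb in auto)
  have iphi: "integrable Uc ?\<phi>"
    by (rule st(2)) (use Fb in auto)
  have ir: "integrable M (\<lambda>\<omega>. (recs \<alpha> t (\<lambda>i. Xc i \<omega>) k m)\<^sup>2)" for t k
    by (rule integrable_const_bound[where B="(real m)\<^sup>2"])
       (auto intro!: AE_I2 power_mono recs_nonneg recs_Xc_bound)
  have bound: "?\<phi> x \<le> (if x \<le> s then D * x powr (2*\<alpha>) else C * s powr (2*\<alpha>))" if x: "0 < x" "x \<le> 1" for x
  proof (cases "x \<le> s")
    case True
    have "(\<integral>\<omega>. (x powr \<alpha> + recs \<alpha> x (\<lambda>i. Xc i \<omega>) (Suc n) m)\<^sup>2 \<partial>M)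
        \<le> (\<integral>\<omega>. (1 + 1/\<alpha>) * x powr (2*\<alpha>) + (1 + \<alpha>) * (recs \<alpha> x (\<lambda>i. Xc i \<omega>) (Suc n) m)\<^sup>2 \<partial>M)"
    proof (rule integral_mono)
      show "integrable M (\<lambda>\<omega>. (x powr \<alpha> + recs \<alpha> x (\<lambda>i. Xc i \<omega>) (Suc n) m)\<^sup>2)"
        by (rule integrable_const_bound[where B="(1 + real m)\<^sup>2"])
           (use x apos in \<open>auto intro!: AE_I2 power_mono add_mono powr_le1 recs_nonneg recs_Xc_bound add_nonneg_nonneg\<close>)
      show "integrable M (\<lambda>\<omega>. (1 + 1/\<alpha>) * x powr (2*\<alpha>) + (1 + \<alpha>) * (recs \<alpha> x (\<lambda>i. Xc i \<omega>) (Suc n) m)\<^sup>2)"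
        using ir by simp
      fix \<omega>
      have "(x powr \<alpha>)\<^sup>2 = x powr (2*\<alpha>)"
        using x by (simp add: power2_eq_square powr_add[symmetric])
      then show "(x powr \<alpha> + recs \<alpha> x (\<lambda>i. Xc i \<omega>) (Suc n) m)\<^sup>2
          \<le> (1 + 1/\<alpha>) * x powr (2*\<alpha>) + (1 + \<alpha>) * (recs \<alpha> x (\<lambda>i. Xc i \<omega>) (Suc n) m)\<^sup>2"
        using sq_ineq[of "x powr \<alpha>" "recs \<alpha> x (\<lambda>i. Xc i \<omega>) (Suc n) m"] by simp
    qed
    also have "\<dots> = (1 + 1/\<alpha>) * x powr (2*\<alpha>) + (1 + \<alpha>) * (\<integral>\<omega>. (recs \<alpha> x (\<lambda>i. Xc i \<omega>) (Suc n) m)\<^sup>2 \<partial>M)"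
      using ir by (simp add: prob_space)
    also have "\<dots> \<le> (1 + 1/\<alpha>) * x powr (2*\<alpha>) + (1 + \<alpha>) * (C * x powr (2*\<alpha>))"
      using Suc.IH[of x "Suc n"] x apos unfolding C_def by (intro add_left_mono mult_left_mono) auto
    also have "\<dots> = D * x powr (2*\<alpha>)" by (simp add: D_def algebra_simps)
    finally show ?thesis using True by simp
  next
    case False
    then show ?thesis using Suc.IH[of s "Suc n"] Suc.prems by (simp add: C_def)
  qed
  have "(\<integral>x. ?\<phi> x \<partial>Uc) \<le> (\<integral>x. (if x \<le> s then D * x powr (2*\<alpha>) else C * s powr (2*\<alpha>)) \<partial>Uc)"
  proof (rule integral_mono_AE[OF iphi])
    show "integrable Uc (\<lambda>x. if x \<le> s then D * x powr (2*\<alpha>) else C * s powr (2*\<alpha>))"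
    proof (rule integrable_Uc_bounded[where B="\<bar>D\<bar> + \<bar>C * s powr (2*\<alpha>)\<bar>"])
      fix x :: real assume x: "0 < x" "x \<le> 1"
      have p: "x powr (2*\<alpha>) \<le> 1" using x apos by (intro powr_le1) auto
      have "\<bar>D\<bar> * x powr (2*\<alpha>) \<le> \<bar>D\<bar>" using p by (intro mult_left_le) auto
      then show "norm (if x \<le> s then D * x powr (2*\<alpha>) else C * s powr (2*\<alpha>)) \<le> \<bar>D\<bar> + \<bar>C * s powr (2*\<alpha>)\<bar>"
        by (auto simp: abs_mult intro: order.trans[OF _ add_increasing2[OF mult_nonneg_nonneg[OF abs_ge_zero powr_ge_zero] order.refl]])
    qed simp
    show "AE x in Uc. ?\<phi> x \<le> (if x \<le> s then D * x powr (2*\<alpha>) else C * s powr (2*\<alpha>))"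
      using AE_Uc by eventually_elim (use bound in auto)
  qed
  also have "\<dots> = D * (s powr (2*\<alpha>+1) / (2*\<alpha>+1)) + C * s powr (2*\<alpha>) * (1 - s)"
    by (rule Uc_if_integral) (use Suc.prems apos in auto)
  also have "\<dots> = C * s powr (2*\<alpha>)"
    using apos Suc.prems by (simp add: DC powr_add field_simps)
  finally show ?case unfolding eq C_def .
qed

end

context recsetup begin

lemma recs_integrable: "integrable M (\<lambda>\<omega>. recs \<alpha> t (\<lambda>i. Xc i \<omega>) k m)"
  by (rule integrable_const_bound[where B="real m"])
     (auto intro!: AE_I2 simp: abs_of_nonneg recs_nonneg recs_Xc_bound)

lemma mom1:
  assumes "0 \<le> s" "s \<le> 1"
  shows "(\<integral>\<omega>. recs \<alpha> s (\<lambda>i. Xc i \<omega>) n m \<partial>M) \<le> s powr \<alpha> / \<alpha>"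
  using assms
proof (induction m arbitrary: n s)
  case 0
  then show ?case using apos by simp
next
  case (Suc m)
  note st = recs_step[where F="\<lambda>r. r" and B="real (Suc m)" and s=s and n=n and m=m]
  let ?\<phi> = "\<lambda>x. (if x \<le> s then (\<integral>\<omega>. x powr \<alpha> + recs \<alpha> x (\<lambda>i. Xc i \<omega>) (Suc n) m \<partial>M)
                         else (\<integral>\<omega>. recs \<alpha> s (\<lambda>i. Xc i \<omega>) (Suc n) m \<partial>M))"
  have eq: "(\<integral>\<omega>. recs \<alpha> s (\<lambda>i. Xc i \<omega>) n (Suc m) \<partial>M) = (\<integral>x. ?\<phi> x \<partial>Uc)"
    by (rule st(1)) auto
  have iphi: "integrable Uc ?\<phi>"
    by (rule st(2)) auto
  have bound: "?\<phi> x \<le> (if x \<le> s then (1 + 1/\<alpha>) * x powr \<alpha> else s powr \<alpha> / \<alpha>)" if x: "0 < x" "x \<le> 1" for x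
  proof (cases "x \<le> s")
    case True
    have "(\<integral>\<omega>. x powr \<alpha> + recs \<alpha> x (\<lambda>i. Xc i \<omega>) (Suc n) m \<partial>M)
        = x powr \<alpha> + (\<integral>\<omega>. recs \<alpha> x (\<lambda>i. Xc i \<omega>) (Suc n) m \<partial>M)"
      using recs_integrable by (simp add: prob_space)
    also have "\<dots> \<le> x powr \<alpha> + x powr \<alpha> / \<alpha>"
      using Suc.IH[of x "Suc n"] x by simp
    also have "\<dots> = (1 + 1/\<alpha>) * x powr \<alpha>" by (simp add: algebra_simps)
    finally show ?thesis using True by simp
  next
    case False
    then show ?thesis using Suc.IH[of s "Suc n"] Suc.prems by simp
  qed
  have "(\<integral>x. ?\<phi> x \<partial>Uc) \<le> (\<integral>x. (if x \<le> s then (1 + 1/\<alpha>) * x powr \<alpha> else s powr \<alpha> / \<alpha>) \<partial>Uc)"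
  proof (rule integral_mono_AE[OF iphi])
    show "integrable Uc (\<lambda>x. if x \<le> s then (1 + 1/\<alpha>) * x powr \<alpha> else s powr \<alpha> / \<alpha>)"
    proof (rule integrable_Uc_bounded[where B="(1 + 1/\<alpha>) + s powr \<alpha> / \<alpha>"])
      fix x :: real assume x: "0 < x" "x \<le> 1"
      have p: "x powr \<alpha> \<le> 1" using x apos by (intro powr_le1) auto
      have "(1 + 1/\<alpha>) * x powr \<alpha> \<le> (1 + 1/\<alpha>)" using p apos by (intro mult_left_le) auto
      moreover have b0: "0 \<le> s powr \<alpha> / \<alpha>" using apos by simp
      moreover have a0: "0 \<le> (1 + 1/\<alpha>) * x powr \<alpha>" using apos by simp
      ultimately have a: "\<bar>(1 + 1/\<alpha>) * x powr \<alpha>\<bar> \<le> (1 + 1/\<alpha>) + s powr \<alpha> / \<alpha>" by linarith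
      have b: "\<bar>s powr \<alpha> / \<alpha>\<bar> \<le> (1 + 1/\<alpha>) + s powr \<alpha> / \<alpha>" using apos b0 by simp
      show "norm (if x \<le> s then (1 + 1/\<alpha>) * x powr \<alpha> else s powr \<alpha> / \<alpha>) \<le> (1 + 1/\<alpha>) + s powr \<alpha> / \<alpha>"
        using a b by (cases "x \<le> s") (simp_all del: abs_divide)
    qed simp
    show "AE x in Uc. ?\<phi> x \<le> (if x \<le> s then (1 + 1/\<alpha>) * x powr \<alpha> else s powr \<alpha> / \<alpha>)"
      using AE_Uc by eventually_elim (use bound in auto)
  qed
  also have "\<dots> = (1 + 1/\<alpha>) * (s powr (\<alpha>+1) / (\<alpha>+1)) + s powr \<alpha> / \<alpha> * (1 - s)"
    by (rule Uc_if_integral) (use Suc.prems apos in auto)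
  also have "\<dots> = s powr \<alpha> / \<alpha>"
  proof -
    have e1: "(1 + 1/\<alpha>) * (A / (\<alpha>+1)) = A / \<alpha>" for A
    proof -
      have "1 + 1/\<alpha> = (\<alpha>+1)/\<alpha>" using apos by (simp add: field_simps)
      then show ?thesis using apos by simp
    qed
    have e2: "s powr (\<alpha>+1) = s * s powr \<alpha>"
      using Suc.prems by (simp add: powr_add)
    have e3: "s * s powr \<alpha> / \<alpha> + s powr \<alpha> / \<alpha> * (1 - s) = s powr \<alpha> / \<alpha>"
      using apos by (simp add: field_simps)
    show ?thesis using e3 by (simp only: e1 e2)
  qed
  finally show ?case unfolding eq .
qed

lemma char_rec: "(\<integral>\<omega>. iexp (t * recs \<alpha> s (\<lambda>i. Xc i \<omega>) n m) \<partial>M) = hfun \<alpha> t m s"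
proof (induction m arbitrary: n s)
  case 0
  then show ?case by (simp add: prob_space)
next
  case (Suc m)
  note st = recs_step[where F="\<lambda>r. iexp (t * r)" and B=1 and s=s and n=n and m=m]
  have "(\<integral>\<omega>. iexp (t * recs \<alpha> s (\<lambda>i. Xc i \<omega>) n (Suc m)) \<partial>M)
     = (\<integral>x. (if x \<le> s then (\<integral>\<omega>. iexp (t * (x powr \<alpha> + recs \<alpha> x (\<lambda>i. Xc i \<omega>) (Suc n) m)) \<partial>M)
                         else (\<integral>\<omega>. iexp (t * recs \<alpha> s (\<lambda>i. Xc i \<omega>) (Suc n) m) \<partial>M)) \<partial>Uc)"
    by (rule st(1)) (auto simp: norm_exp_i_times)
  also have "\<dots> = (\<integral>x. (if x \<le> s then iexp (t * x powr \<alpha>) * hfun \<alpha> t m x else hfun \<alpha> t m s) \<partial>Uc)"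
  proof (rule Bochner_Integration.integral_cong[OF refl])
    fix x
    have "(\<integral>\<omega>. iexp (t * (x powr \<alpha> + recs \<alpha> x (\<lambda>i. Xc i \<omega>) (Suc n) m)) \<partial>M)
        = (\<integral>\<omega>. iexp (t * x powr \<alpha>) * iexp (t * recs \<alpha> x (\<lambda>i. Xc i \<omega>) (Suc n) m) \<partial>M)"
      by (simp add: distrib_left exp_add[symmetric] algebra_simps)
    also have "\<dots> = iexp (t * x powr \<alpha>) * hfun \<alpha> t m x"
      using Suc.IH[of x "Suc n"] by simp
    finally show "(if x \<le> s then (\<integral>\<omega>. iexp (t * (x powr \<alpha> + recs \<alpha> x (\<lambda>i. Xc i \<omega>) (Suc n) m)) \<partial>M)
                         else (\<integral>\<omega>. iexp (t * recs \<alpha> s (\<lambda>i. Xc i \<omega>) (Suc n) m) \<partial>M))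
        = (if x \<le> s then iexp (t * x powr \<alpha>) * hfun \<alpha> t m x else hfun \<alpha> t m s)"
      using Suc.IH[of s "Suc n"] by simp
  qed
  finally show ?case by simp
qed

lemma hfun_norm: "norm (hfun \<alpha> t m s) \<le> 1"
proof -
  have "norm (\<integral>\<omega>. iexp (t * recs \<alpha> s (\<lambda>i. Xc i \<omega>) 0 m) \<partial>M) \<le> (\<integral>\<omega>. norm (iexp (t * recs \<alpha> s (\<lambda>i. Xc i \<omega>) 0 m)) \<partial>M)"
    by (rule integral_norm_bound)
  also have "\<dots> = 1" by (simp add: norm_exp_i_times prob_space)
  finally show ?thesis using char_rec[of t s 0 m] by simp
qed

lemma hfun_near1:
  assumes "0 \<le> s" "s \<le> 1"
  shows "norm (hfun \<alpha> t m s - 1) \<le> \<bar>t\<bar> * (s powr \<alpha> / \<alpha>)"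
proof -
  have ii: "integrable M (\<lambda>\<omega>. iexp (t * recs \<alpha> s (\<lambda>i. Xc i \<omega>) 0 m))"
    by (rule integrable_const_bound[where B=1]) (auto simp: norm_exp_i_times)
  have "hfun \<alpha> t m s - 1 = (\<integral>\<omega>. iexp (t * recs \<alpha> s (\<lambda>i. Xc i \<omega>) 0 m) - 1 \<partial>M)"
    using ii char_rec[of t s 0 m] by (simp add: prob_space)
  then have "norm (hfun \<alpha> t m s - 1) \<le> (\<integral>\<omega>. norm (iexp (t * recs \<alpha> s (\<lambda>i. Xc i \<omega>) 0 m) - 1) \<partial>M)"
    by (simp add: integral_norm_bound)
  also have "\<dots> \<le> (\<integral>\<omega>. \<bar>t\<bar> * recs \<alpha> s (\<lambda>i. Xc i \<omega>) 0 m \<partial>M)"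
  proof (rule integral_mono)
    show "integrable M (\<lambda>\<omega>. norm (iexp (t * recs \<alpha> s (\<lambda>i. Xc i \<omega>) 0 m) - 1))"
      using ii by auto
    show "integrable M (\<lambda>\<omega>. \<bar>t\<bar> * recs \<alpha> s (\<lambda>i. Xc i \<omega>) 0 m)"
      using recs_integrable by simp
    fix \<omega>
    have "cmod (iexp (t * recs \<alpha> s (\<lambda>i. Xc i \<omega>) 0 m) - 1) \<le> \<bar>t * recs \<alpha> s (\<lambda>i. Xc i \<omega>) 0 m\<bar>"
      using iexp_approx1[of "t * recs \<alpha> s (\<lambda>i. Xc i \<omega>) 0 m" 0] by simp
    then show "norm (iexp (t * recs \<alpha> s (\<lambda>i. Xc i \<omega>) 0 m) - 1) \<le> \<bar>t\<bar> * recs \<alpha> s (\<lambda>i. Xc i \<omega>) 0 m"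
      by (simp add: abs_mult recs_nonneg)
  qed
  also have "\<dots> = \<bar>t\<bar> * (\<integral>\<omega>. recs \<alpha> s (\<lambda>i. Xc i \<omega>) 0 m \<partial>M)" by simp
  also have "\<dots> \<le> \<bar>t\<bar> * (s powr \<alpha> / \<alpha>)"
    by (rule mult_left_mono[OF mom1[OF assms]]) simp
  finally show ?thesis .
qed

end

context recsetup begin

definition Rinf :: "real \<Rightarrow> 'a \<Rightarrow> ennreal" where
  "Rinf s \<omega> = (SUP m. ennreal (recs \<alpha> s (\<lambda>i. Xc i \<omega>) 0 m))"

definition R :: "real \<Rightarrow> 'a \<Rightarrow> real" where
  "R s \<omega> = enn2real (Rinf s \<omega>)"

lemma Rinf_meas[measurable]: "Rinf s \<in> borel_measurable M"
  unfolding Rinf_def[abs_def] by measurable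

lemma R_meas[measurable]: "R s \<in> borel_measurable M"
  unfolding R_def[abs_def] by measurable

lemma recs_incseq: "incseq (\<lambda>m. recs \<alpha> s x n m)"
  by (rule incseq_SucI) (rule recs_mono_m, simp)

lemma Rinf_fin: "AE \<omega> in M. Rinf 1 \<omega> \<noteq> \<infinity>"
proof (rule nn_integral_PInf_AE)
  show "Rinf 1 \<in> borel_measurable M" by simp
  have "(\<integral>\<^sup>+ \<omega>. Rinf 1 \<omega> \<partial>M) = (SUP m. \<integral>\<^sup>+ \<omega>. ennreal (recs \<alpha> 1 (\<lambda>i. Xc i \<omega>) 0 m) \<partial>M)"
    unfolding Rinf_def
    by (rule nn_integral_monotone_convergence_SUP)
       (auto simp: incseq_def le_fun_def intro!: ennreal_leI recs_mono_m)
  also have "\<dots> \<le> ennreal (1 / \<alpha>)"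
  proof (rule SUP_least)
    fix m
    have "(\<integral>\<^sup>+ \<omega>. ennreal (recs \<alpha> 1 (\<lambda>i. Xc i \<omega>) 0 m) \<partial>M) = ennreal (\<integral>\<omega>. recs \<alpha> 1 (\<lambda>i. Xc i \<omega>) 0 m \<partial>M)"
      by (rule nn_integral_eq_integral) (auto intro: recs_integrable recs_nonneg)
    also have "\<dots> \<le> ennreal (1 / \<alpha>)"
      using mom1[of 1 0 m] by (intro ennreal_leI) simp
    finally show "(\<integral>\<^sup>+ \<omega>. ennreal (recs \<alpha> 1 (\<lambda>i. Xc i \<omega>) 0 m) \<partial>M) \<le> ennreal (1 / \<alpha>)" .
  qed
  finally show "(\<integral>\<^sup>+ \<omega>. Rinf 1 \<omega> \<partial>M) \<noteq> \<infinity>"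
    by (auto simp: top_unique)
qed

lemma Rinf_mono: "s \<le> 1 \<Longrightarrow> Rinf s \<omega> \<le> Rinf 1 \<omega>"
  unfolding Rinf_def by (intro SUP_mono) (auto intro!: ennreal_leI recs_mono_s)

lemma R_lim:
  assumes s: "s \<le> 1" and fin: "Rinf 1 \<omega> \<noteq> \<infinity>"
  shows "(\<lambda>m. recs \<alpha> s (\<lambda>i. Xc i \<omega>) 0 m) \<longlonglongrightarrow> R s \<omega>"
    and "recs \<alpha> s (\<lambda>i. Xc i \<omega>) 0 m \<le> R s \<omega>"
proof -
  have fs: "Rinf s \<omega> \<noteq> \<infinity>" using Rinf_mono[OF s, of \<omega>] fin by (auto simp: top_unique)
  have lim: "(\<lambda>m. ennreal (recs \<alpha> s (\<lambda>i. Xc i \<omega>) 0 m)) \<longlonglongrightarrow> Rinf s \<omega>"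
    unfolding Rinf_def
    by (rule LIMSEQ_SUP) (auto simp: incseq_def intro!: ennreal_leI recs_mono_m)
  obtain r where r: "Rinf s \<omega> = ennreal r" "r \<ge> 0" using fs by (cases "Rinf s \<omega>") auto
  have "(\<lambda>m. enn2real (ennreal (recs \<alpha> s (\<lambda>i. Xc i \<omega>) 0 m))) \<longlonglongrightarrow> r"
    by (rule tendsto_enn2real) (use lim r in auto)
  then show "(\<lambda>m. recs \<alpha> s (\<lambda>i. Xc i \<omega>) 0 m) \<longlonglongrightarrow> R s \<omega>"
    using r by (simp add: R_def recs_nonneg)
  have "ennreal (recs \<alpha> s (\<lambda>i. Xc i \<omega>) 0 m) \<le> Rinf s \<omega>"
    unfolding Rinf_def by (rule SUP_upper) simp
  then show "recs \<alpha> s (\<lambda>i. Xc i \<omega>) 0 m \<le> R s \<omega>"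
    using r by (simp add: R_def)
qed

lemma R_nonneg: "0 \<le> R s \<omega>"
  by (simp add: R_def)

lemma R_sq_integrable: "integrable M (\<lambda>\<omega>. (R 1 \<omega>)\<^sup>2)"
proof (rule integrableI_bounded)
  show "(\<lambda>\<omega>. (R 1 \<omega>)\<^sup>2) \<in> borel_measurable M" by simp
  have le: "AE \<omega> in M. ennreal (norm ((R 1 \<omega>)\<^sup>2)) \<le> (SUP m. ennreal ((recs \<alpha> 1 (\<lambda>i. Xc i \<omega>) 0 m)\<^sup>2))"
    using Rinf_fin
  proof eventually_elim
    case (elim \<omega>)
    have l: "(\<lambda>m. recs \<alpha> 1 (\<lambda>i. Xc i \<omega>) 0 m) \<longlonglongrightarrow> R 1 \<omega>" using R_lim(1)[OF order.refl elim] .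
    have "(\<lambda>m. ennreal ((recs \<alpha> 1 (\<lambda>i. Xc i \<omega>) 0 m)\<^sup>2)) \<longlonglongrightarrow> ennreal ((R 1 \<omega>)\<^sup>2)"
      by (intro tendsto_ennrealI tendsto_intros l)
    moreover have "(\<lambda>m. ennreal ((recs \<alpha> 1 (\<lambda>i. Xc i \<omega>) 0 m)\<^sup>2)) \<longlonglongrightarrow> (SUP m. ennreal ((recs \<alpha> 1 (\<lambda>i. Xc i \<omega>) 0 m)\<^sup>2))"
      by (rule LIMSEQ_SUP) (auto simp: incseq_def intro!: ennreal_leI power_mono recs_mono_m recs_nonneg)
    ultimately have "ennreal ((R 1 \<omega>)\<^sup>2) = (SUP m. ennreal ((recs \<alpha> 1 (\<lambda>i. Xc i \<omega>) 0 m)\<^sup>2))"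
      by (rule LIMSEQ_unique)
    then show ?case by simp
  qed
  have "(\<integral>\<^sup>+ \<omega>. ennreal (norm ((R 1 \<omega>)\<^sup>2)) \<partial>M) \<le> (\<integral>\<^sup>+ \<omega>. (SUP m. ennreal ((recs \<alpha> 1 (\<lambda>i. Xc i \<omega>) 0 m)\<^sup>2)) \<partial>M)"
    by (rule nn_integral_mono_AE[OF le])
  also have "\<dots> = (SUP m. \<integral>\<^sup>+ \<omega>. ennreal ((recs \<alpha> 1 (\<lambda>i. Xc i \<omega>) 0 m)\<^sup>2) \<partial>M)"
    by (rule nn_integral_monotone_convergence_SUP)
       (auto simp: incseq_def le_fun_def intro!: ennreal_leI power_mono recs_mono_m recs_nonneg)
  also have "\<dots> \<le> ennreal ((1 + 1/\<alpha>)/\<alpha>)"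
  proof (rule SUP_least)
    fix m
    have ii: "integrable M (\<lambda>\<omega>. (recs \<alpha> 1 (\<lambda>i. Xc i \<omega>) 0 m)\<^sup>2)"
      by (rule integrable_const_bound[where B="(real m)\<^sup>2"])
         (auto intro!: AE_I2 power_mono recs_nonneg recs_Xc_bound)
    have "(\<integral>\<^sup>+ \<omega>. ennreal ((recs \<alpha> 1 (\<lambda>i. Xc i \<omega>) 0 m)\<^sup>2) \<partial>M) = ennreal (\<integral>\<omega>. (recs \<alpha> 1 (\<lambda>i. Xc i \<omega>) 0 m)\<^sup>2 \<partial>M)"
      by (rule nn_integral_eq_integral[OF ii]) auto
    also have "\<dots> \<le> ennreal ((1 + 1/\<alpha>)/\<alpha>)"
      using mom2[of 1 0 m] by (intro ennreal_leI) simp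
    finally show "(\<integral>\<^sup>+ \<omega>. ennreal ((recs \<alpha> 1 (\<lambda>i. Xc i \<omega>) 0 m)\<^sup>2) \<partial>M) \<le> ennreal ((1 + 1/\<alpha>)/\<alpha>)" .
  qed
  finally show "(\<integral>\<^sup>+ \<omega>. ennreal (norm ((R 1 \<omega>)\<^sup>2)) \<partial>M) < \<infinity>"
    by (auto simp: top_unique less_top[symmetric] intro: le_less_trans)
qed

end

context recsetup begin

lemma L0_AE: "AE \<omega> in M. \<forall>m. L0 \<alpha> (\<lambda>i. if i = 0 then 0 else X i \<omega>) m = recs \<alpha> 1 (\<lambda>i. Xc i \<omega>) 0 m"
  using AE_Xall
proof eventually_elim
  case (elim \<omega>)
  show ?case
  proof
    fix m
    have "L0 \<alpha> (\<lambda>i. if i = 0 then 0 else X i \<omega>) m = recs \<alpha> 1 (\<lambda>i. if i = 0 then 0 else X i \<omega>) 0 m"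
      by (rule L0_eq_recs) (use elim in auto)
    also have "\<dots> = recs \<alpha> 1 (\<lambda>i. Xc i \<omega>) 0 m"
      by (rule recs_local) (use elim in \<open>auto simp: Xc_def\<close>)
    finally show "L0 \<alpha> (\<lambda>i. if i = 0 then 0 else X i \<omega>) m = recs \<alpha> 1 (\<lambda>i. Xc i \<omega>) 0 m" .
  qed
qed

lemma L0_meas[measurable]: "(\<lambda>\<omega>. L0 \<alpha> (\<lambda>i. if i = 0 then 0 else X i \<omega>) m) \<in> borel_measurable M"
proof (rule L0_measurable)
  fix j show "(\<lambda>\<omega>. if j = 0 then 0 else X j \<omega>) \<in> borel_measurable M"
    by (cases "j = 0") (auto intro: X_meas)
qed

lemma L0_conv: "AE \<omega> in M. (\<lambda>m. L0 \<alpha> (\<lambda>i. if i = 0 then 0 else X i \<omega>) m) \<longlonglongrightarrow> R 1 \<omega>"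
  using L0_AE Rinf_fin
proof eventually_elim
  case (elim \<omega>)
  then show ?case using R_lim(1)[OF order.refl elim(2)] by simp
qed

lemma L0_L2:
  shows "\<forall>m. integrable M (\<lambda>\<omega>. (L0 \<alpha> (\<lambda>i. if i = 0 then 0 else X i \<omega>) m - R 1 \<omega>)\<^sup>2)"
    and "(\<lambda>m. integral\<^sup>L M (\<lambda>\<omega>. (L0 \<alpha> (\<lambda>i. if i = 0 then 0 else X i \<omega>) m - R 1 \<omega>)\<^sup>2)) \<longlonglongrightarrow> 0"
proof -
  let ?s = "\<lambda>m \<omega>. (L0 \<alpha> (\<lambda>i. if i = 0 then 0 else X i \<omega>) m - R 1 \<omega>)\<^sup>2"
  have sm: "\<And>m. ?s m \<in> borel_measurable M" by measurable
  have lim: "AE \<omega> in M. (\<lambda>m. ?s m \<omega>) \<longlonglongrightarrow> (\<lambda>\<omega>. 0::real) \<omega>"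
    using L0_conv
  proof eventually_elim
    case (elim \<omega>)
    have "(\<lambda>m. (L0 \<alpha> (\<lambda>i. if i = 0 then 0 else X i \<omega>) m - R 1 \<omega>)\<^sup>2) \<longlonglongrightarrow> (R 1 \<omega> - R 1 \<omega>)\<^sup>2"
      by (intro tendsto_intros elim)
    then show ?case by simp
  qed
  have bound: "AE \<omega> in M. norm (?s m \<omega>) \<le> (R 1 \<omega>)\<^sup>2" for m
    using L0_AE Rinf_fin
  proof eventually_elim
    case (elim \<omega>)
    have le: "recs \<alpha> 1 (\<lambda>i. Xc i \<omega>) 0 m \<le> R 1 \<omega>" by (rule R_lim(2)[OF order.refl elim(2)])
    have ge: "0 \<le> recs \<alpha> 1 (\<lambda>i. Xc i \<omega>) 0 m" by (rule recs_nonneg)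
    have "(recs \<alpha> 1 (\<lambda>i. Xc i \<omega>) 0 m - R 1 \<omega>)\<^sup>2 \<le> (R 1 \<omega>)\<^sup>2"
    proof -
      have "\<bar>recs \<alpha> 1 (\<lambda>i. Xc i \<omega>) 0 m - R 1 \<omega>\<bar> \<le> \<bar>R 1 \<omega>\<bar>" using le ge by simp
      then show ?thesis by (simp add: abs_le_square_iff)
    qed
    then show ?case using elim(1) by simp
  qed
  have f0: "(\<lambda>\<omega>. 0::real) \<in> borel_measurable M" by simp
  note dc = integrable_dominated_convergence2[OF f0 sm R_sq_integrable lim bound]
       integral_dominated_convergence[OF f0 sm R_sq_integrable lim bound]
  show "\<forall>m. integrable M (?s m)" using dc(1) by blast
  show "(\<lambda>m. integral\<^sup>L M (?s m)) \<longlonglongrightarrow> 0" using dc(2) by simp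
qed

definition hh :: "real \<Rightarrow> real \<Rightarrow> complex" where
  "hh t s = (\<integral>\<omega>. iexp (t * R s \<omega>) \<partial>M)"

lemma hfun_lim:
  assumes s: "s \<le> 1"
  shows "(\<lambda>m. hfun \<alpha> t m s) \<longlonglongrightarrow> hh t s"
proof -
  have f: "(\<lambda>\<omega>. iexp (t * R s \<omega>)) \<in> borel_measurable M" by simp
  have sm: "\<And>m. (\<lambda>\<omega>. iexp (t * recs \<alpha> s (\<lambda>i. Xc i \<omega>) 0 m)) \<in> borel_measurable M" by simp
  have w: "integrable M (\<lambda>\<omega>. 1::real)" by simp
  have lim: "AE \<omega> in M. (\<lambda>m. iexp (t * recs \<alpha> s (\<lambda>i. Xc i \<omega>) 0 m)) \<longlonglongrightarrow> iexp (t * R s \<omega>)"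
    using Rinf_fin
  proof eventually_elim
    case (elim \<omega>)
    show ?case
      by (intro tendsto_intros R_lim(1)[OF s elim])
  qed
  have bound: "\<And>m. AE \<omega> in M. norm (iexp (t * recs \<alpha> s (\<lambda>i. Xc i \<omega>) 0 m)) \<le> 1"
    by (simp add: norm_exp_i_times)
  have "(\<lambda>m. \<integral>\<omega>. iexp (t * recs \<alpha> s (\<lambda>i. Xc i \<omega>) 0 m) \<partial>M) \<longlonglongrightarrow> (\<integral>\<omega>. iexp (t * R s \<omega>) \<partial>M)"
    by (rule integral_dominated_convergence[OF f sm w lim bound])
  then show ?thesis unfolding char_rec hh_def .
qed

lemma hh_near1:
  assumes "0 \<le> s" "s \<le> 1"
  shows "norm (hh t s - 1) \<le> \<bar>t\<bar> * (s powr \<alpha> / \<alpha>)"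
proof -
  have "(\<lambda>m. norm (hfun \<alpha> t m s - 1)) \<longlonglongrightarrow> norm (hh t s - 1)"
    by (intro tendsto_intros hfun_lim assms)
  then show ?thesis
    by (rule LIMSEQ_le_const2) (use hfun_near1[OF assms] in auto)
qed

lemma hh_norm: "s \<le> 1 \<Longrightarrow> norm (hh t s) \<le> 1"
proof -
  assume s: "s \<le> 1"
  have "(\<lambda>m. norm (hfun \<alpha> t m s)) \<longlonglongrightarrow> norm (hh t s)"
    by (intro tendsto_intros hfun_lim s)
  then show ?thesis
    by (rule LIMSEQ_le_const2) (use hfun_norm in auto)
qed

lemma char_inner:
  "(\<integral>\<omega>. iexp (t * (x powr \<alpha> + recs \<alpha> x (\<lambda>i. Xc i \<omega>) (Suc n) m)) \<partial>M) = iexp (t * x powr \<alpha>) * hfun \<alpha> t m x"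
proof -
  have "(\<integral>\<omega>. iexp (t * (x powr \<alpha> + recs \<alpha> x (\<lambda>i. Xc i \<omega>) (Suc n) m)) \<partial>M)
      = (\<integral>\<omega>. iexp (t * x powr \<alpha>) * iexp (t * recs \<alpha> x (\<lambda>i. Xc i \<omega>) (Suc n) m) \<partial>M)"
    by (simp add: distrib_left exp_add[symmetric] algebra_simps)
  also have "\<dots> = iexp (t * x powr \<alpha>) * hfun \<alpha> t m x"
    using char_rec[of t x "Suc n" m] by simp
  finally show ?thesis .
qed

lemma hfun_integrand_integrable:
  "integrable Uc (\<lambda>x. if x \<le> s then iexp (t * x powr \<alpha>) * hfun \<alpha> t m x else hfun \<alpha> t m s)"
proof -
  note st = recs_step(2)[where F="\<lambda>r. iexp (t * r)" and B=1 and s=s and n=0 and m=m]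
  have "integrable Uc (\<lambda>x. if x \<le> s then (\<integral>\<omega>. iexp (t * (x powr \<alpha> + recs \<alpha> x (\<lambda>i. Xc i \<omega>) (Suc 0) m)) \<partial>M)
                         else (\<integral>\<omega>. iexp (t * recs \<alpha> s (\<lambda>i. Xc i \<omega>) (Suc 0) m) \<partial>M))"
    by (rule st) (auto simp: norm_exp_i_times)
  then show ?thesis unfolding char_inner char_rec .
qed

lemma hh_eq:
  assumes s: "0 \<le> s" "s \<le> 1"
  shows "hh t s = (\<integral>x. (if x \<le> s then iexp (t * x powr \<alpha>) * hh t x else hh t s) \<partial>Uc)"
proof -
  interpret U: prob_space Uc by (rule prob_space_Uc)
  let ?f = "\<lambda>m x. if x \<le> s then iexp (t * x powr \<alpha>) * hfun \<alpha> t m x else hfun \<alpha> t m s"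
  let ?g = "\<lambda>x. if x \<le> s then iexp (t * x powr \<alpha>) * hh t x else hh t s"
  have fm: "\<And>m. ?f m \<in> borel_measurable Uc"
    using hfun_integrand_integrable by (rule borel_measurable_integrable)
  have flim: "(\<lambda>m. ?f m x) \<longlonglongrightarrow> ?g x" for x
  proof (cases "x \<le> s")
    case True
    then show ?thesis using s by (simp, intro tendsto_intros hfun_lim) simp
  next
    case False
    then show ?thesis using s by (simp add: hfun_lim)
  qed
  have gm: "?g \<in> borel_measurable Uc"
    by (rule borel_measurable_LIMSEQ_metric[OF fm flim])
  have w: "integrable Uc (\<lambda>x. 1::real)" by simp
  have bound: "\<And>m. AE x in Uc. norm (?f m x) \<le> 1"
    by (intro AE_I2) (auto simp: norm_mult norm_exp_i_times hfun_norm)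
  have "(\<lambda>m. integral\<^sup>L Uc (?f m)) \<longlonglongrightarrow> integral\<^sup>L Uc ?g"
    by (rule integral_dominated_convergence[OF gm fm w _ bound]) (simp add: flim)
  then have "(\<lambda>m. hfun \<alpha> t (Suc m) s) \<longlonglongrightarrow> integral\<^sup>L Uc ?g" by simp
  moreover have "(\<lambda>m. hfun \<alpha> t (Suc m) s) \<longlonglongrightarrow> hh t s"
    using hfun_lim[OF s(2)] by (rule LIMSEQ_Suc)
  ultimately show ?thesis using LIMSEQ_unique by blast
qed

end

lemma Uc_tail_c:
  assumes s: "0 \<le> s" "s \<le> 1"
  shows "(\<integral>x. (if x \<le> s then 0 else c) \<partial>Uc) = c * complex_of_real (1 - s)"
proof -
  have "(\<integral>x. (if x \<le> s then 0 else c) \<partial>Uc) = (\<integral>x. complex_of_real (if x \<le> s then 0 else 1) * c \<partial>Uc)"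
    by (rule Bochner_Integration.integral_cong) auto
  also have "\<dots> = (\<integral>x. complex_of_real (if x \<le> s then 0 else 1) \<partial>Uc) * c"
    by (rule integral_mult_left_zero)
  also have "\<dots> = c * complex_of_real (1 - s)"
    using Uc_tail[OF s] by simp
  finally show ?thesis .
qed

lemma Uc_scale:
  fixes f :: "real \<Rightarrow> complex"
  assumes f[measurable]: "(\<lambda>x. if x \<le> s * y then f x else 0) \<in> borel_measurable borel" and s: "0 < s" "s \<le> 1" and y: "0 \<le> y" "y \<le> 1"
  shows "(\<integral>x. (if x \<le> s * y then f x else 0) \<partial>Uc) = s * (\<integral>z. (if z \<le> y then f (s * z) else 0) \<partial>Uc)"
proof -
  have fc: "(\<lambda>z. if z \<le> y then f (s * z) else 0) \<in> borel_measurable borel"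
  proof -
    have "(\<lambda>z. (\<lambda>x. if x \<le> s * y then f x else 0) (s * z)) \<in> borel_measurable borel"
      by (rule measurable_compose[OF _ f]) simp
    moreover have "(\<lambda>z. (\<lambda>x. if x \<le> s * y then f x else 0) (s * z)) = (\<lambda>z. if z \<le> y then f (s * z) else 0)"
      using s by auto
    ultimately show ?thesis by simp
  qed
  have sy: "s * y \<le> 1" using s y by (simp add: mult_le_one)
  have "(\<integral>x. (if x \<le> s * y then f x else 0) \<partial>Uc)
      = (\<integral>x. indicator {0<..1} x *\<^sub>R (if x \<le> s * y then f x else 0) \<partial>lborel)"
    by (rule integral_Uc) (rule f)
  also have "\<dots> = (\<integral>x. indicator {0<..s*y} x *\<^sub>R f x \<partial>lborel)"
    by (rule Bochner_Integration.integral_cong) (use sy in \<open>auto simp: indicator_def\<close>)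
  also have "\<dots> = \<bar>s\<bar> *\<^sub>R (\<integral>z. indicator {0<..s*y} (0 + s * z) *\<^sub>R f (0 + s * z) \<partial>lborel)"
    by (rule lborel_integral_real_affine) (use s in auto)
  also have "(\<integral>z. indicator {0<..s*y} (0 + s * z) *\<^sub>R f (0 + s * z) \<partial>lborel)
      = (\<integral>z. indicator {0<..1} z *\<^sub>R (if z \<le> y then f (s * z) else 0) \<partial>lborel)"
  proof (rule Bochner_Integration.integral_cong[OF refl])
    fix z
    have "(0 < s * z \<and> s * z \<le> s * y) \<longleftrightarrow> (0 < z \<and> z \<le> y)"
      using s by (simp add: zero_less_mult_iff)
    then show "indicator {0<..s*y} (0 + s * z) *\<^sub>R f (0 + s * z) = indicator {0<..1} z *\<^sub>R (if z \<le> y then f (s * z) else 0)"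
      using y by (auto simp: indicator_def)
  qed
  also have "\<dots> = (\<integral>z. (if z \<le> y then f (s * z) else 0) \<partial>Uc)"
    by (rule integral_Uc[symmetric]) (rule fc)
  finally show ?thesis using s by (simp add: scaleR_conv_of_real)
qed

lemma unique_sol:
  fixes d e :: "real \<Rightarrow> complex"
  assumes a: "a > 0" and K: "K \<ge> 0"
    and eq: "\<And>y. 0 \<le> y \<Longrightarrow> y \<le> 1 \<Longrightarrow> complex_of_real y * d y = (\<integral>x. (if x \<le> y then e x * d x else 0) \<partial>Uc)"
    and int: "\<And>y. 0 \<le> y \<Longrightarrow> y \<le> 1 \<Longrightarrow> integrable Uc (\<lambda>x. if x \<le> y then e x * d x else 0)"
    and ne: "\<And>x. norm (e x) \<le> 1"
    and bd: "\<And>y. 0 \<le> y \<Longrightarrow> y \<le> 1 \<Longrightarrow> norm (d y) \<le> K * y powr a"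
    and y: "0 \<le> y" "y \<le> 1"
  shows "d y = 0"
proof -
  have step: "\<forall>y. 0 \<le> y \<longrightarrow> y \<le> 1 \<longrightarrow> norm (d y) \<le> (K / (a+1)^k) * y powr a" for k
  proof (induction k)
    case 0 then show ?case using bd by simp
  next
    case (Suc k)
    show ?case
    proof (intro allI impI)
      fix y :: real assume y: "0 \<le> y" "y \<le> 1"
      define Kk where "Kk = K / (a+1)^k"
      have Kk0: "Kk \<ge> 0" using K a by (simp add: Kk_def)
      have "norm (complex_of_real y * d y) \<le> (\<integral>x. norm (if x \<le> y then e x * d x else 0) \<partial>Uc)"
        unfolding eq[OF y] by (rule integral_norm_bound)
      also have "\<dots> \<le> (\<integral>x. (if x \<le> y then Kk * x powr a else 0) \<partial>Uc)"
      proof (rule integral_mono_AE)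
        show "integrable Uc (\<lambda>x. norm (if x \<le> y then e x * d x else 0))"
          using int[OF y] by (rule integrable_norm)
        show "integrable Uc (\<lambda>x. if x \<le> y then Kk * x powr a else 0)"
        proof (rule integrable_Uc_bounded[where B=Kk])
          fix x :: real assume x: "0 < x" "x \<le> 1"
          have "x powr a \<le> 1" using x a by (intro powr_le1) auto
          then have "Kk * x powr a \<le> Kk" using Kk0 by (intro mult_left_le) auto
          then show "norm (if x \<le> y then Kk * x powr a else 0) \<le> Kk" using Kk0 by auto
        qed simp
        show "AE x in Uc. norm (if x \<le> y then e x * d x else 0) \<le> (if x \<le> y then Kk * x powr a else 0)"
          using AE_Uc
        proof eventually_elim
          case (elim x)
          show ?case
          proof (cases "x \<le> y")
            case True
            have "norm (e x * d x) \<le> 1 * norm (d x)" unfolding norm_mult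
              by (rule mult_right_mono[OF ne]) simp
            also have "\<dots> \<le> Kk * x powr a" using Suc.IH elim by (simp add: Kk_def)
            finally show ?thesis using True by simp
          qed simp
        qed
      qed
      also have "\<dots> = Kk * (y powr (a+1) / (a+1)) + 0 * (1 - y)"
        by (rule Uc_if_integral) (use y a in auto)
      finally have I: "y * norm (d y) \<le> Kk * (y powr (a+1) / (a+1))"
        using y by (simp add: norm_mult)
      show "norm (d y) \<le> (K / (a+1)^Suc k) * y powr a"
      proof (cases "y = 0")
        case True then show ?thesis using bd[of 0] by simp
      next
        case False
        then have yp: "y > 0" using y by simp
        have "y powr (a+1) = y * y powr a" using yp by (simp add: powr_add)
        then have "y * norm (d y) \<le> y * (Kk / (a+1) * y powr a)" using I by (simp add: field_simps)
        then have "norm (d y) \<le> Kk / (a+1) * y powr a" using yp by (rule mult_left_le_imp_le)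
        then show ?thesis by (simp add: Kk_def field_simps)
      qed
    qed
  qed
  have lim: "(\<lambda>k. (K / (a+1)^k) * y powr a) \<longlonglongrightarrow> 0"
  proof -
    have "(\<lambda>k. K * (1 / (a+1))^k * y powr a) \<longlonglongrightarrow> K * 0 * y powr a"
      by (intro tendsto_intros LIMSEQ_power_zero) (use a in auto)
    then show ?thesis by (simp add: power_one_over divide_inverse power_inverse)
  qed
  have "norm (d y) \<le> 0"
    by (rule LIMSEQ_le_const[OF lim]) (use step y in auto)
  then show ?thesis by simp
qed

context recsetup begin

lemma hh_cut_meas:
  assumes u: "u \<le> 1"
  shows "(\<lambda>x. if x \<le> u then hh t x else 0) \<in> borel_measurable borel"
proof -
  let ?F = "\<lambda>m x. if x \<le> u then iexp (t * x powr \<alpha>) * hfun \<alpha> t m x else hfun \<alpha> t m u"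
  have Fm: "?F m \<in> borel_measurable borel" for m
    using borel_measurable_integrable[OF hfun_integrand_integrable[of u t m]] by simp
  let ?G = "\<lambda>m x. if x \<le> u then iexp (- (t * x powr \<alpha>)) * ?F m x else 0"
  have Gm: "?G m \<in> borel_measurable borel" for m
    using Fm[of m] by measurable
  have Geq: "?G m x = (if x \<le> u then hfun \<alpha> t m x else 0)" for m x
    by (auto simp: mult.assoc[symmetric] exp_add[symmetric])
  have lim: "(\<lambda>m. ?G m x) \<longlonglongrightarrow> (if x \<le> u then hh t x else 0)" for x
    unfolding Geq using u by (cases "x \<le> u") (auto intro: hfun_lim)
  show ?thesis by (rule borel_measurable_LIMSEQ_metric[OF Gm lim])
qed

lemma hh_eqA:
  assumes s: "0 \<le> s" "s \<le> 1"
  shows "complex_of_real s * hh t s = (\<integral>x. (if x \<le> s then iexp (t * x powr \<alpha>) * hh t x else 0) \<partial>Uc)"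
    and "integrable Uc (\<lambda>x. if x \<le> s then iexp (t * x powr \<alpha>) * hh t x else 0)"
proof -
  have m1: "(\<lambda>x. if x \<le> s then iexp (t * x powr \<alpha>) * hh t x else 0) \<in> borel_measurable borel"
  proof -
    have "(\<lambda>x. iexp (t * x powr \<alpha>) * (if x \<le> s then hh t x else 0)) \<in> borel_measurable borel"
      using hh_cut_meas[OF s(2), of t] by measurable
    moreover have "(\<lambda>x. iexp (t * x powr \<alpha>) * (if x \<le> s then hh t x else 0)) = (\<lambda>x. if x \<le> s then iexp (t * x powr \<alpha>) * hh t x else 0)"
      by auto
    ultimately show ?thesis by simp
  qed
  show i1: "integrable Uc (\<lambda>x. if x \<le> s then iexp (t * x powr \<alpha>) * hh t x else 0)"
    by (rule integrable_Uc_bounded[OF m1, where B=1])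
       (use s in \<open>auto simp: norm_mult norm_exp_i_times intro!: hh_norm\<close>)
  have i2: "integrable Uc (\<lambda>x. if x \<le> s then 0 else hh t s)"
    by (rule integrable_Uc_bounded[where B="norm (hh t s)"]) auto
  have "hh t s = (\<integral>x. (if x \<le> s then iexp (t * x powr \<alpha>) * hh t x else hh t s) \<partial>Uc)"
    by (rule hh_eq[OF s])
  also have "\<dots> = (\<integral>x. (if x \<le> s then iexp (t * x powr \<alpha>) * hh t x else 0) + (if x \<le> s then 0 else hh t s) \<partial>Uc)"
    by (rule Bochner_Integration.integral_cong) auto
  also have "\<dots> = (\<integral>x. (if x \<le> s then iexp (t * x powr \<alpha>) * hh t x else 0) \<partial>Uc) + hh t s * complex_of_real (1 - s)"
    using i1 i2 Uc_tail_c[OF s, of "hh t s"] by simp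
  finally show "complex_of_real s * hh t s = (\<integral>x. (if x \<le> s then iexp (t * x powr \<alpha>) * hh t x else 0) \<partial>Uc)"
    by (simp add: algebra_simps)
qed

lemma hh_scale:
  assumes s: "0 < s" "s \<le> 1"
  shows "hh t s = hh (t * s powr \<alpha>) 1"
proof -
  define \<tau> where "\<tau> = t * s powr \<alpha>"
  define d where "d = (\<lambda>y. hh t (s * y) - hh \<tau> y)"
  define e where "e = (\<lambda>x. iexp (\<tau> * x powr \<alpha>))"
  have sy: "0 \<le> s * y" "s * y \<le> 1" if "0 \<le> y" "y \<le> 1" for y
    using that s by (auto simp: mult_le_one)
  have gmeas: "(\<lambda>z. if z \<le> y then e z * hh t (s * z) else 0) \<in> borel_measurable borel" if y: "0 \<le> y" "y \<le> 1" for y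
  proof -
    have "(\<lambda>z. (\<lambda>x. if x \<le> s * y then hh t x else 0) (s * z)) \<in> borel_measurable borel"
      by (rule measurable_compose[OF _ hh_cut_meas[OF sy(2)[OF y]]]) simp
    then have "(\<lambda>z. e z * (\<lambda>x. if x \<le> s * y then hh t x else 0) (s * z)) \<in> borel_measurable borel"
      unfolding e_def by measurable
    moreover have "(\<lambda>z. e z * (\<lambda>x. if x \<le> s * y then hh t x else 0) (s * z)) = (\<lambda>z. if z \<le> y then e z * hh t (s * z) else 0)"
      using s by auto
    ultimately show ?thesis by simp
  qed
  have gint: "integrable Uc (\<lambda>z. if z \<le> y then e z * hh t (s * z) else 0)" if y: "0 \<le> y" "y \<le> 1" for y
    by (rule integrable_Uc_bounded[OF gmeas[OF y], where B=1])
       (use s y in \<open>auto simp: e_def norm_mult norm_exp_i_times intro!: hh_norm mult_le_one\<close>)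
  have geq: "complex_of_real y * hh t (s * y) = (\<integral>z. (if z \<le> y then e z * hh t (s * z) else 0) \<partial>Uc)"
    if y: "0 \<le> y" "y \<le> 1" for y
  proof -
    have fm: "(\<lambda>x. if x \<le> s * y then iexp (t * x powr \<alpha>) * hh t x else 0) \<in> borel_measurable borel"
      using borel_measurable_integrable[OF hh_eqA(2)[OF sy[OF y], of t]] by simp
    have "complex_of_real s * (complex_of_real y * hh t (s * y)) = complex_of_real (s * y) * hh t (s * y)" by simp
    also have "\<dots> = (\<integral>x. (if x \<le> s * y then iexp (t * x powr \<alpha>) * hh t x else 0) \<partial>Uc)"
      by (rule hh_eqA(1)[OF sy[OF y]])
    also have "\<dots> = s * (\<integral>z. (if z \<le> y then iexp (t * (s * z) powr \<alpha>) * hh t (s * z) else 0) \<partial>Uc)"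
      by (rule Uc_scale[OF fm s y])
    also have "(\<integral>z. (if z \<le> y then iexp (t * (s * z) powr \<alpha>) * hh t (s * z) else 0) \<partial>Uc)
        = (\<integral>z. (if z \<le> y then e z * hh t (s * z) else 0) \<partial>Uc)"
    proof (rule integral_cong_AE)
      show "(\<lambda>z. if z \<le> y then iexp (t * (s * z) powr \<alpha>) * hh t (s * z) else 0) \<in> borel_measurable Uc"
      proof -
        have "(\<lambda>z. (\<lambda>x. if x \<le> s * y then iexp (t * x powr \<alpha>) * hh t x else 0) (s * z)) \<in> borel_measurable borel"
          by (rule measurable_compose[OF _ fm]) simp
        moreover have "(\<lambda>z. (\<lambda>x. if x \<le> s * y then iexp (t * x powr \<alpha>) * hh t x else 0) (s * z))
            = (\<lambda>z. if z \<le> y then iexp (t * (s * z) powr \<alpha>) * hh t (s * z) else 0)"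
          using s by auto
        ultimately show ?thesis by simp
      qed
      show "(\<lambda>z. if z \<le> y then e z * hh t (s * z) else 0) \<in> borel_measurable Uc"
        using gmeas[OF y] by simp
      show "AE z in Uc. (if z \<le> y then iexp (t * (s * z) powr \<alpha>) * hh t (s * z) else 0) = (if z \<le> y then e z * hh t (s * z) else 0)"
        using AE_Uc
      proof eventually_elim
        case (elim z)
        have "(s * z) powr \<alpha> = s powr \<alpha> * z powr \<alpha>" using s elim by (simp add: powr_mult)
        then show ?case by (simp add: e_def \<tau>_def mult.assoc)
      qed
    qed
    finally have "complex_of_real s * (complex_of_real y * hh t (s * y)) = complex_of_real s * (\<integral>z. (if z \<le> y then e z * hh t (s * z) else 0) \<partial>Uc)" .
    then show ?thesis using s by simp
  qed
  have heq: "complex_of_real y * hh \<tau> y = (\<integral>z. (if z \<le> y then e z * hh \<tau> z else 0) \<partial>Uc)"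
    and hint: "integrable Uc (\<lambda>z. if z \<le> y then e z * hh \<tau> z else 0)"
    if y: "0 \<le> y" "y \<le> 1" for y
    using hh_eqA[OF y, of \<tau>] unfolding e_def by auto
  have "d 1 = 0"
  proof (rule unique_sol[where a=\<alpha> and K="(\<bar>t\<bar> + \<bar>\<tau>\<bar>) / \<alpha>" and e=e])
    show "\<alpha> > 0" by (rule apos)
    show "(\<bar>t\<bar> + \<bar>\<tau>\<bar>) / \<alpha> \<ge> 0" using apos by simp
    fix y :: real assume y: "0 \<le> y" "y \<le> 1"
    have split: "(\<lambda>x. if x \<le> y then e x * d x else 0) = (\<lambda>x. (if x \<le> y then e x * hh t (s * x) else 0) - (if x \<le> y then e x * hh \<tau> x else 0))"
      by (auto simp: d_def algebra_simps)
    show "integrable Uc (\<lambda>x. if x \<le> y then e x * d x else 0)"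
      unfolding split using gint[OF y] hint[OF y] by simp
    show "complex_of_real y * d y = (\<integral>x. (if x \<le> y then e x * d x else 0) \<partial>Uc)"
      unfolding split using gint[OF y] hint[OF y] geq[OF y] heq[OF y]
      by (simp add: d_def algebra_simps)
    have n1: "norm (hh t (s * y) - 1) \<le> \<bar>t\<bar> * ((s * y) powr \<alpha> / \<alpha>)"
      by (rule hh_near1[OF sy[OF y]])
    have n2: "norm (hh \<tau> y - 1) \<le> \<bar>\<tau>\<bar> * (y powr \<alpha> / \<alpha>)"
      by (rule hh_near1[OF y])
    have sya: "(s * y) powr \<alpha> \<le> y powr \<alpha>"
      using s y apos by (intro powr_mono2) (auto simp: mult_le_cancel_right1 mult_left_le_one_le)
    have "norm (d y) \<le> norm (hh t (s * y) - 1) + norm (hh \<tau> y - 1)"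
      unfolding d_def by (rule order.trans[OF _ norm_triangle_ineq4]) (simp add: algebra_simps)
    also have "\<dots> \<le> \<bar>t\<bar> * (y powr \<alpha> / \<alpha>) + \<bar>\<tau>\<bar> * (y powr \<alpha> / \<alpha>)"
      using n1 n2 sya apos by (smt (verit) divide_right_mono mult_left_mono abs_ge_zero)
    also have "\<dots> = (\<bar>t\<bar> + \<bar>\<tau>\<bar>) / \<alpha> * y powr \<alpha>" by (simp add: add_divide_distrib algebra_simps)
    finally show "norm (d y) \<le> (\<bar>t\<bar> + \<bar>\<tau>\<bar>) / \<alpha> * y powr \<alpha>" .
  next
    fix x show "norm (e x) \<le> 1" by (simp add: e_def norm_exp_i_times)
  qed auto
  then show ?thesis by (simp add: d_def \<tau>_def)
qed

end

lemma uniform_eq_Uc: "uniform_measure lborel {0<..<1::real} = Uc"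
proof -
  have "uniform_measure lborel {0<..<1::real} = density lborel (\<lambda>x. indicator {0<..<1::real} x / emeasure lborel {0<..<1::real})"
    by (simp add: uniform_measure_def)
  also have "\<dots> = density lborel (\<lambda>x. ennreal (indicator {0<..1} x))"
  proof (rule density_cong)
    show "AE x in lborel. indicator {0<..<1::real} x / emeasure lborel {0<..<1::real} = ennreal (indicator {0<..1} x)"
      using AE_lborel_singleton[of "1::real"]
      by eventually_elim (auto simp: indicator_def)
  qed auto
  finally show ?thesis by (simp add: Uc_def)
qed

context recsetup begin

abbreviation "\<mu> \<equiv> distr M borel (R 1)"

lemma real_dist_mu: "real_distribution \<mu>"
  by (rule real_distribution_distr) simp

lemma char_mu: "char \<mu> t = hh t 1"
  unfolding char_def hh_def by (subst integral_distr) auto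

lemma char_rhs:
  "char (distr (Uc \<Otimes>\<^sub>M \<mu>) borel (\<lambda>(u, x). u powr \<alpha> * (1 + x))) t = hh t 1"
proof -
  interpret U: prob_space Uc by (rule prob_space_Uc)
  interpret Mu: prob_space \<mu> by (rule prob_space_distr) simp
  interpret P: pair_prob_space Uc \<mu> ..
  have fm[measurable]: "(\<lambda>(u, x). u powr \<alpha> * (1 + x)) \<in> borel_measurable (Uc \<Otimes>\<^sub>M \<mu>)"
    by (subst measurable_cong_sets[OF sets_pair_measure_cong[OF sets_Uc sets_distr] refl]) measurable
  let ?F = "\<lambda>p. iexp (t * (case p of (u, x) \<Rightarrow> u powr \<alpha> * (1 + x)))"
  have Fm: "?F \<in> borel_measurable (Uc \<Otimes>\<^sub>M \<mu>)" using fm by measurable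
  have Fi: "integrable (Uc \<Otimes>\<^sub>M \<mu>) ?F"
    by (rule P.integrable_const_bound[where B=1]) (auto simp: norm_exp_i_times intro: Fm)
  have "char (distr (Uc \<Otimes>\<^sub>M \<mu>) borel (\<lambda>(u, x). u powr \<alpha> * (1 + x))) t = integral\<^sup>L (Uc \<Otimes>\<^sub>M \<mu>) ?F"
    unfolding char_def by (subst integral_distr) auto
  also have "\<dots> = (\<integral>u. (\<integral>x. ?F (u, x) \<partial>\<mu>) \<partial>Uc)"
    by (rule P.integral_fst'[OF Fi, symmetric])
  also have "\<dots> = (\<integral>u. (if u \<le> 1 then iexp (t * u powr \<alpha>) * hh t u else hh t 1) \<partial>Uc)"
  proof (rule integral_cong_AE)
    show "(\<lambda>u. \<integral>x. ?F (u, x) \<partial>\<mu>) \<in> borel_measurable Uc"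
      by (rule borel_measurable_integrable[OF P.integrable_fst'[OF Fi]])
    have m1: "(\<lambda>x. if x \<le> 1 then iexp (t * x powr \<alpha>) * hh t x else 0) \<in> borel_measurable Uc"
      by (rule borel_measurable_integrable[OF hh_eqA(2)]) auto
    then show "(\<lambda>u. if u \<le> 1 then iexp (t * u powr \<alpha>) * hh t u else hh t 1) \<in> borel_measurable Uc"
    proof -
      have "(\<lambda>x. (if x \<le> 1 then iexp (t * x powr \<alpha>) * hh t x else 0) + (if x \<le> 1 then 0 else hh t 1)) \<in> borel_measurable Uc"
        using m1 by measurable
      moreover have "(\<lambda>x. (if x \<le> 1 then iexp (t * x powr \<alpha>) * hh t x else 0) + (if x \<le> 1 then 0 else hh t 1))
          = (\<lambda>u. if u \<le> 1 then iexp (t * u powr \<alpha>) * hh t u else hh t 1)" by auto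
      ultimately show ?thesis by simp
    qed
    show "AE u in Uc. (\<integral>x. ?F (u, x) \<partial>\<mu>) = (if u \<le> 1 then iexp (t * u powr \<alpha>) * hh t u else hh t 1)"
      using AE_Uc
    proof eventually_elim
      case (elim u)
      have "(\<integral>x. ?F (u, x) \<partial>\<mu>) = (\<integral>x. iexp (t * u powr \<alpha>) * iexp ((t * u powr \<alpha>) * x) \<partial>\<mu>)"
        by (simp add: distrib_left exp_add[symmetric] algebra_simps)
      also have "\<dots> = iexp (t * u powr \<alpha>) * char \<mu> (t * u powr \<alpha>)"
        unfolding char_def by simp
      also have "\<dots> = iexp (t * u powr \<alpha>) * hh t u"
        using hh_scale[of u t] elim by (simp add: char_mu)
      finally show ?case using elim by simp
    qed
  qed
  also have "\<dots> = hh t 1"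
    by (rule hh_eq[symmetric]) auto
  finally show ?thesis .
qed

lemma gen_dickman_mu: "gen_dickman (1 / \<alpha>) \<mu>"
  unfolding gen_dickman_def
proof (intro conjI)
  show "prob_space \<mu>" by (rule prob_space_distr) simp
  show "sets \<mu> = sets borel" by simp
  show "AE x in \<mu>. 0 \<le> x"
    by (subst AE_distr_iff) (auto simp: R_nonneg)
  interpret U: prob_space Uc by (rule prob_space_Uc)
  interpret Mu: prob_space \<mu> by (rule prob_space_distr) simp
  interpret P: pair_prob_space Uc \<mu> ..
  have fm[measurable]: "(\<lambda>(u, x). u powr \<alpha> * (1 + x)) \<in> borel_measurable (Uc \<Otimes>\<^sub>M \<mu>)"
    by (subst measurable_cong_sets[OF sets_pair_measure_cong[OF sets_Uc sets_distr] refl]) measurable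
  have rd: "real_distribution (distr (Uc \<Otimes>\<^sub>M \<mu>) borel (\<lambda>(u, x). u powr \<alpha> * (1 + x)))"
    by (rule P.real_distribution_distr) (rule fm)
  have "\<mu> = distr (Uc \<Otimes>\<^sub>M \<mu>) borel (\<lambda>(u, x). u powr \<alpha> * (1 + x))"
    by (rule Levy_uniqueness[OF real_dist_mu rd]) (auto simp: fun_eq_iff char_mu char_rhs)
  then show "\<mu> = distr (uniform_measure lborel {0<..<1} \<Otimes>\<^sub>M \<mu>) borel (\<lambda>(u, x). u powr (1 / (1 / \<alpha>)) * (1 + x))"
    by (simp add: uniform_eq_Uc)
qed

end

theorem lemma2:
  fixes M :: "'a measure" and X :: "nat \<Rightarrow> 'a \<Rightarrow> real" and \<alpha> :: real
  assumes "prob_space M"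
    and "\<alpha> > 0"
    and "prob_space.indep_vars M (\<lambda>_. borel) X {1..}"
    and "\<And>i. i \<ge> 1 \<Longrightarrow> distributed M lborel (X i) (\<lambda>x. ennreal (indicator {0<..1} x))"
  shows "\<exists>L. L \<in> borel_measurable M \<and>
           gen_dickman (1 / \<alpha>) (distr M borel L) \<and>
           (AE \<omega> in M. (\<lambda>m. L0 \<alpha> (\<lambda>i. if i = 0 then 0 else X i \<omega>) m) \<longlonglongrightarrow> L \<omega>) \<and>
           integrable M (\<lambda>\<omega>. (L \<omega>)\<^sup>2) \<and>
           (\<forall>m. integrable M (\<lambda>\<omega>. (L0 \<alpha> (\<lambda>i. if i = 0 then 0 else X i \<omega>) m - L \<omega>)\<^sup>2)) \<and>
           (\<lambda>m. integral\<^sup>L M (\<lambda>\<omega>. (L0 \<alpha> (\<lambda>i. if i = 0 then 0 else X i \<omega>) m - L \<omega>)\<^sup>2))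
              \<longlonglongrightarrow> 0"
proof -
  interpret recsetup M X \<alpha>
    by (intro recsetup.intro recsetup_axioms.intro assms)
  show ?thesis
  proof (intro exI conjI)
    show "R 1 \<in> borel_measurable M" by simp
    show "gen_dickman (1 / \<alpha>) (distr M borel (R 1))" by (rule gen_dickman_mu)
    show "AE \<omega> in M. (\<lambda>m. L0 \<alpha> (\<lambda>i. if i = 0 then 0 else X i \<omega>) m) \<longlonglongrightarrow> R 1 \<omega>" by (rule L0_conv)
    show "integrable M (\<lambda>\<omega>. (R 1 \<omega>)\<^sup>2)" by (rule R_sq_integrable)
    show "\<forall>m. integrable M (\<lambda>\<omega>. (L0 \<alpha> (\<lambda>i. if i = 0 then 0 else X i \<omega>) m - R 1 \<omega>)\<^sup>2)" by (rule L0_L2(1))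
    show "(\<lambda>m. integral\<^sup>L M (\<lambda>\<omega>. (L0 \<alpha> (\<lambda>i. if i = 0 then 0 else X i \<omega>) m - R 1 \<omega>)\<^sup>2)) \<longlonglongrightarrow> 0"
      by (rule L0_L2(2))
  qed
qed

end
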